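(* Let $R$ be a commutative ring with $\mathbb{Q}\subseteq R$, $\mathcal{A}$ a commutative unital $R$-algebra, and $\mathcal{E}$ a finitely generated projective $\mathcal{A}$-module with a symmetric, strongly nondegenerate, full $\mathcal{A}$-bilinear form $\langle\cdot,\cdot\rangle$. Let $[\cdot,\cdot]$ be the bracket on $\mathcal{C}^\bullet(\mathcal{E})$ described in the context. Then there exists a unique associative, graded commutative, $R$-bilinear product $\wedge$ of degree zero on $\mathcal{C}^\bullet(\mathcal{E})$ with the following properties: - $a\wedge b=ab=b\wedge a$ for $a,b\in\mathcal{A}$; - $a\wedge x=ax=x\wedge a$ for $a\in\mathcal{A}$, $x\in\mathcal{E}$; - $[\mathsf{C}_1\wedge\mathsf{C}_2,x]=(-1)^s[\mathsf{C}_1,x]\wedge\mathsf{C}_2+\mathsf{C}_1\wedge[\mathsf{C}_2,x]$ for all $\mathsf{C}_1\in\mathcal{C}^r(\mathcal{E})$, $\mathsf{C}_2\in\mathcal{C}^s(\mathcal{E})$, $x\in\mathcal{E}$.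
   Context: Strongly nondegenerate: $\mathcal{E}\to\operatorname{Hom}_{\mathcal{A}}(\mathcal{E},\mathcal{A})$ is an isomorphism. Full: every $a\in\mathcal{A}$ is a finite sum $\sum_i\langle x_i,y_i\rangle$. $\operatorname{Der}(\mathcal{A})$: $R$-linear derivations of $\mathcal{A}$. $\mathcal{C}^0(\mathcal{E})=\mathcal{A}$ and $\mathcal{C}^1(\mathcal{E})=\mathcal{E}$. For $r\ge2$, $\mathcal{C}^r(\mathcal{E})$ is the set of $\mathsf{C}\in\operatorname{Hom}_R(\mathcal{E}^{\otimes_R(r-1)},\mathcal{E})$ admitting an $R$-multilinear symbol $\sigma_{\mathsf{C}}:\mathcal{E}^{\otimes(r-2)}\to\operatorname{Der}(\mathcal{A})$ with two properties: (1) $\sigma_{\mathsf{C}}(x_1,\dots,x_{r-2})\langle u,w\rangle=\langle\mathsf{C}(x_1,\dots,x_{r-2},u),w\rangle+\langle u,\mathsf{C}(x_1,\dots,x_{r-2},w)\rangle$; (2) for $r\ge3$ and $1\le i\le r-2$, $\langle\mathsf{C}(\dots,x_i,x_{i+1},\dots)+\mathsf{C}(\dots,x_{i+1},x_i,\dots),u\rangle=\sigma_{\mathsf{C}}(x_1,\dots,\widehat{x_i},\widehat{x_{i+1}},\dots,x_{r-1},u)\langle x_i,x_{i+1}\rangle$. $\mathcal{C}^\bullet(\mathcal{E})=\bigoplus_r\mathcal{C}^r(\mathcal{E})$. $i_x\mathsf{C}$ inserts $x$ into the first argument of $\mathsf{C}\in\mathcal{C}^r$, $r\ge2$. $[\cdot,\cdot]$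 is the unique $R$-bilinear graded skew-symmetric map $\mathcal{C}^r\times\mathcal{C}^s\to\mathcal{C}^{r+s-2}$ with: - $[a,b]=0$ and $[a,x]=0=[x,a]$; - $[x,y]=\langle x,y\rangle$; - $[\mathsf{D},a]=\sigma_{\mathsf{D}}(a)=-[a,\mathsf{D}]$ for $\mathsf{D}\in\mathcal{C}^2$; - $[\mathsf{C},x]=i_x\mathsf{C}=(-1)^{r+1}[x,\mathsf{C}]$ for $\mathsf{C}\in\mathcal{C}^r$ with $r\ge2$; - $[[\mathsf{C}_1,\mathsf{C}_2],x]=(-1)^s[[\mathsf{C}_1,x],\mathsf{C}_2]+[\mathsf{C}_1,[\mathsf{C}_2,x]]$. *)

theory Defs
  imports Complex_Main
begin

definition ring_hom_fn :: "('r::comm_ring_1 \<Rightarrow> 'a::comm_ring_1) \<Rightarrow> bool" where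
  "ring_hom_fn f \<longleftrightarrow> f 1 = 1 \<and> (\<forall>x y. f (x + y) = f x + f y) \<and> (\<forall>x y. f (x * y) = f x * f y)"

(* E finitely generated projective over A: a direct summand of some A^n, i.e. an
   A-linear p : E -> A^n and an A-linear s : A^n -> E (s v = sum v_i e_i) with s o p = id. *)
definition fg_projective :: "('a::comm_ring_1 \<Rightarrow> 'e::ab_group_add \<Rightarrow> 'e) \<Rightarrow> bool" where
  "fg_projective sm \<longleftrightarrow> (\<exists>(n::nat) (e::nat \<Rightarrow> 'e) (p::'e \<Rightarrow> nat \<Rightarrow> 'a).
      (\<forall>x y i. p (x + y) i = p x i + p y i) \<and> (\<forall>a x i. p (sm a x) i = a * p x i) \<and>
      (\<forall>x. (\<Sum>i<n. sm (p x i) (e i)) = x))"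

definition sym_bilinear :: "('a::comm_ring_1 \<Rightarrow> 'e::ab_group_add \<Rightarrow> 'e) \<Rightarrow> ('e \<Rightarrow> 'e \<Rightarrow> 'a) \<Rightarrow> bool" where
  "sym_bilinear sm B \<longleftrightarrow> (\<forall>x y. B x y = B y x) \<and>
     (\<forall>x y z. B (x + y) z = B x z + B y z) \<and> (\<forall>a x y. B (sm a x) y = a * B x y) \<and>
     (\<forall>x y z. B x (y + z) = B x y + B x z) \<and> (\<forall>a x y. B x (sm a y) = a * B x y)"

definition strongly_nondeg :: "('a::comm_ring_1 \<Rightarrow> 'e::ab_group_add \<Rightarrow> 'e) \<Rightarrow> ('e \<Rightarrow> 'e \<Rightarrow> 'a) \<Rightarrow> bool" where
  "strongly_nondeg sm B \<longleftrightarrow> bij_betw B UNIV {f. module_hom sm (*) f}"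

definition full_form :: "('e \<Rightarrow> 'e \<Rightarrow> 'a::comm_ring_1) \<Rightarrow> bool" where
  "full_form B \<longleftrightarrow> (\<forall>a. \<exists>ps. a = sum_list (map (\<lambda>(x, y). B x y) ps))"

definition is_der :: "('r::comm_ring_1 \<Rightarrow> 'a::comm_ring_1) \<Rightarrow> ('a \<Rightarrow> 'a) \<Rightarrow> bool" where
  "is_der \<iota> D \<longleftrightarrow> (\<forall>a b. D (a + b) = D a + D b) \<and> (\<forall>k a. D (\<iota> k * a) = \<iota> k * D a) \<and>
     (\<forall>a b. D (a * b) = a * D b + D a * b)"

definition multilin :: "('r \<Rightarrow> 'b::ab_group_add \<Rightarrow> 'b) \<Rightarrow> ('r \<Rightarrow> 'e::ab_group_add \<Rightarrow> 'e) \<Rightarrow> nat \<Rightarrow> ('e list \<Rightarrow> 'b) \<Rightarrow> bool" where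
  "multilin scB scE n f \<longleftrightarrow> (\<forall>xs i u v k. length xs = n \<longrightarrow> i < n \<longrightarrow>
      f (xs[i := u + v]) = f (xs[i := u]) + f (xs[i := v]) \<and>
      f (xs[i := scE k u]) = scB k (f (xs[i := u])))"

(* C^r(E) for r >= 2: R-multilinear maps E^(r-1) -> E (zero on lists of other length)
   admitting a symbol with properties (1) and (2). *)
definition cochain :: "('r::comm_ring_1 \<Rightarrow> 'a::comm_ring_1) \<Rightarrow> ('a \<Rightarrow> 'e::ab_group_add \<Rightarrow> 'e) \<Rightarrow>
    ('e \<Rightarrow> 'e \<Rightarrow> 'a) \<Rightarrow> nat \<Rightarrow> ('e list \<Rightarrow> 'e) \<Rightarrow> bool" where
  "cochain \<iota> sm B r C \<longleftrightarrow> 2 \<le> r \<and> (\<forall>xs. length xs \<noteq> r - 1 \<longrightarrow> C xs = 0) \<and>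
     multilin (\<lambda>k y. sm (\<iota> k) y) (\<lambda>k y. sm (\<iota> k) y) (r - 1) C \<and>
     (\<exists>\<sigma> :: 'e list \<Rightarrow> 'a \<Rightarrow> 'a.
        (\<forall>a. multilin (\<lambda>k b. \<iota> k * b) (\<lambda>k y. sm (\<iota> k) y) (r - 2) (\<lambda>xs. \<sigma> xs a)) \<and>
        (\<forall>xs. length xs = r - 2 \<longrightarrow> is_der \<iota> (\<sigma> xs)) \<and>
        (\<forall>xs u w. length xs = r - 2 \<longrightarrow>
            \<sigma> xs (B u w) = B (C (xs @ [u])) w + B u (C (xs @ [w]))) \<and>
        (\<forall>xs i u. length xs = r - 1 \<longrightarrow> i + 1 < r - 1 \<longrightarrow>
            B (C xs + C (xs[i := xs ! (i + 1), i + 1 := xs ! i])) u =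
            \<sigma> (take i xs @ drop (i + 2) xs @ [u]) (B (xs ! i) (xs ! (i + 1)))))"

(* An element of C^*(E) = A (+) E (+) (+)_{r>=2} C^r(E), as (a, x, c) with c r in C^r. *)
type_synonym ('a, 'e) cdot = "'a \<times> 'e \<times> (nat \<Rightarrow> 'e list \<Rightarrow> 'e)"

definition Cdot :: "('r::comm_ring_1 \<Rightarrow> 'a::comm_ring_1) \<Rightarrow> ('a \<Rightarrow> 'e::ab_group_add \<Rightarrow> 'e) \<Rightarrow>
    ('e \<Rightarrow> 'e \<Rightarrow> 'a) \<Rightarrow> ('a, 'e) cdot set" where
  "Cdot \<iota> sm B = {(a, x, c). c 0 = (\<lambda>_. 0) \<and> c 1 = (\<lambda>_. 0) \<and>
      (\<forall>r\<ge>2. cochain \<iota> sm B r (c r)) \<and> finite {r. c r \<noteq> (\<lambda>_. 0)}}"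

definition homog :: "('r::comm_ring_1 \<Rightarrow> 'a::comm_ring_1) \<Rightarrow> ('a \<Rightarrow> 'e::ab_group_add \<Rightarrow> 'e) \<Rightarrow>
    ('e \<Rightarrow> 'e \<Rightarrow> 'a) \<Rightarrow> nat \<Rightarrow> ('a, 'e) cdot \<Rightarrow> bool" where
  "homog \<iota> sm B r u \<longleftrightarrow> u \<in> Cdot \<iota> sm B \<and>
     (case u of (a, x, c) \<Rightarrow> (r \<noteq> 0 \<longrightarrow> a = 0) \<and> (r \<noteq> 1 \<longrightarrow> x = 0) \<and>
        (\<forall>r'. r' \<noteq> r \<longrightarrow> c r' = (\<lambda>_. 0)))"

definition cadd :: "('a::comm_ring_1, 'e::ab_group_add) cdot \<Rightarrow> ('a, 'e) cdot \<Rightarrow> ('a, 'e) cdot" where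
  "cadd u v = (case u of (a, x, c) \<Rightarrow> case v of (b, y, d) \<Rightarrow> (a + b, x + y, \<lambda>r xs. c r xs + d r xs))"

definition csc :: "('r::comm_ring_1 \<Rightarrow> 'a::comm_ring_1) \<Rightarrow> ('a \<Rightarrow> 'e::ab_group_add \<Rightarrow> 'e) \<Rightarrow>
    'r \<Rightarrow> ('a, 'e) cdot \<Rightarrow> ('a, 'e) cdot" where
  "csc \<iota> sm k u = (case u of (a, x, c) \<Rightarrow> (\<iota> k * a, sm (\<iota> k) x, \<lambda>r xs. sm (\<iota> k) (c r xs)))"

definition cA :: "'a::comm_ring_1 \<Rightarrow> ('a, 'e::ab_group_add) cdot" where
  "cA a = (a, 0, \<lambda>_ _. 0)"

definition cE :: "'e::ab_group_add \<Rightarrow> ('a::comm_ring_1, 'e) cdot" where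
  "cE x = (0, x, \<lambda>_ _. 0)"

(* The bracket [u, x] with x in E, extended additively:
   [a,x] = 0, [y,x] = <y,x>, [C,x] = i_x C (x inserted in the first argument). *)
definition cbrx :: "('e::ab_group_add \<Rightarrow> 'e \<Rightarrow> 'a::comm_ring_1) \<Rightarrow> ('a, 'e) cdot \<Rightarrow> 'e \<Rightarrow> ('a, 'e) cdot" where
  "cbrx B u x = (case u of (a, y, c) \<Rightarrow>
      (B y x, c 2 [x], \<lambda>r xs. if r < 2 then 0 else c (r + 1) (x # xs)))"

definition is_wedge :: "('r::comm_ring_1 \<Rightarrow> 'a::comm_ring_1) \<Rightarrow> ('a \<Rightarrow> 'e::ab_group_add \<Rightarrow> 'e) \<Rightarrow>
    ('e \<Rightarrow> 'e \<Rightarrow> 'a) \<Rightarrow> (('a, 'e) cdot \<Rightarrow> ('a, 'e) cdot \<Rightarrow> ('a, 'e) cdot) \<Rightarrow> bool" where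
  "is_wedge \<iota> sm B W \<longleftrightarrow>
     (\<forall>u\<in>Cdot \<iota> sm B. \<forall>v\<in>Cdot \<iota> sm B. W u v \<in> Cdot \<iota> sm B) \<and>
     (\<forall>u\<in>Cdot \<iota> sm B. \<forall>v\<in>Cdot \<iota> sm B. \<forall>w\<in>Cdot \<iota> sm B.
        W (cadd u v) w = cadd (W u w) (W v w) \<and> W w (cadd u v) = cadd (W w u) (W w v)) \<and>
     (\<forall>k. \<forall>u\<in>Cdot \<iota> sm B. \<forall>v\<in>Cdot \<iota> sm B.
        W (csc \<iota> sm k u) v = csc \<iota> sm k (W u v) \<and> W u (csc \<iota> sm k v) = csc \<iota> sm k (W u v)) \<and>
     (\<forall>r s u v. homog \<iota> sm B r u \<longrightarrow> homog \<iota> sm B s v \<longrightarrow> homog \<iota> sm B (r + s) (W u v)) \<and>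
     (\<forall>u\<in>Cdot \<iota> sm B. \<forall>v\<in>Cdot \<iota> sm B. \<forall>w\<in>Cdot \<iota> sm B. W (W u v) w = W u (W v w)) \<and>
     (\<forall>r s u v. homog \<iota> sm B r u \<longrightarrow> homog \<iota> sm B s v \<longrightarrow>
        W u v = csc \<iota> sm ((-1) ^ (r * s)) (W v u)) \<and>
     (\<forall>a b. W (cA a) (cA b) = cA (a * b) \<and> W (cA b) (cA a) = cA (a * b)) \<and>
     (\<forall>a x. W (cA a) (cE x) = cE (sm a x) \<and> W (cE x) (cA a) = cE (sm a x)) \<and>
     (\<forall>r s u v x. homog \<iota> sm B r u \<longrightarrow> homog \<iota> sm B s v \<longrightarrow>
        cbrx B (W u v) x = cadd (csc \<iota> sm ((-1) ^ s) (W (cbrx B u x) v)) (W u (cbrx B v x)))"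

end

theory Submission
  imports Defs
begin

fun sh :: "nat \<Rightarrow> nat \<Rightarrow> ('e list \<Rightarrow> 'a::comm_ring_1) \<Rightarrow> ('e list \<Rightarrow> 'a) \<Rightarrow> 'e list \<Rightarrow> 'a" where
  "sh r s f g [] = (if r = 0 \<and> s = 0 then f [] * g [] else 0)"
| "sh r s f g (y # ys) =
     (if 0 < r then (-1) ^ s * sh (r - 1) s (\<lambda>zs. f (y # zs)) g ys else 0) +
     (if 0 < s then sh r (s - 1) f (\<lambda>zs. g (y # zs)) ys else 0)"

lemma sh_len: "length ys \<noteq> r + s \<Longrightarrow> sh r s f g ys = 0"
  by (induction ys arbitrary: r s f g) auto

lemma sh_cong: "(\<And>zs. length zs = r \<Longrightarrow> f zs = f' zs) \<Longrightarrow> (\<And>zs. length zs = s \<Longrightarrow> g zs = g' zs)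
  \<Longrightarrow> sh r s f g ys = sh r s f' g' ys"
proof (induction ys arbitrary: r s f g f' g')
  case Nil then show ?case by auto
next
  case (Cons y ys)
  have 1: "0 < r \<Longrightarrow> sh (r - 1) s (\<lambda>zs. f (y # zs)) g ys = sh (r - 1) s (\<lambda>zs. f' (y # zs)) g' ys"
    by (rule Cons.IH) (use Cons.prems in auto)
  have 2: "0 < s \<Longrightarrow> sh r (s - 1) f (\<lambda>zs. g (y # zs)) ys = sh r (s - 1) f' (\<lambda>zs. g' (y # zs)) ys"
    by (rule Cons.IH) (use Cons.prems in auto)
  show ?case using 1 2 by (cases s; cases r) simp_all
qed

lemma sh_add1: "sh r s (\<lambda>zs. f zs + f' zs) g ys = sh r s f g ys + sh r s f' g ys"
  by (induction ys arbitrary: r s f f' g) (auto simp: algebra_simps)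
lemma sh_add2: "sh r s f (\<lambda>zs. g zs + g' zs) ys = sh r s f g ys + sh r s f g' ys"
  by (induction ys arbitrary: r s f g g') (auto simp: algebra_simps)
lemma sh_mul1: "sh r s (\<lambda>zs. c * f zs) g ys = c * sh r s f g ys"
  by (induction ys arbitrary: r s f g) (auto simp: algebra_simps)
lemma sh_mul2: "sh r s f (\<lambda>zs. c * g zs) ys = c * sh r s f g ys"
  by (induction ys arbitrary: r s f g) (auto simp: algebra_simps)
lemma sh_neg1: "sh r s (\<lambda>zs. - f zs) g ys = - sh r s f g ys"
  using sh_mul1[of r s "-1" f g ys] by simp
lemma sh_neg2: "sh r s f (\<lambda>zs. - g zs) ys = - sh r s f g ys"
  using sh_mul2[of r s f "-1" g ys] by simp
lemma sh_diff1: "sh r s (\<lambda>zs. f zs - f' zs) g ys = sh r s f g ys - sh r s f' g ys"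
  using sh_add1[of r s f "\<lambda>zs. - f' zs" g ys] by (simp add: sh_neg1)
lemma sh_diff2: "sh r s f (\<lambda>zs. g zs - g' zs) ys = sh r s f g ys - sh r s f g' ys"
  using sh_add2[of r s f g "\<lambda>zs. - g' zs" ys] by (simp add: sh_neg2)
lemma sh_zero1: "(\<And>zs. length zs = r \<Longrightarrow> f zs = 0) \<Longrightarrow> sh r s f g ys = 0"
proof -
  assume a: "\<And>zs. length zs = r \<Longrightarrow> f zs = 0"
  have "sh r s f g ys = sh r s (\<lambda>zs. 0 * f zs) g ys" by (rule sh_cong) (auto simp: a)
  also have "\<dots> = 0" by (simp only: sh_mul1) simp
  finally show ?thesis .
qed
lemma sh_zero2: "(\<And>zs. length zs = s \<Longrightarrow> g zs = 0) \<Longrightarrow> sh r s f g ys = 0"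
proof -
  assume a: "\<And>zs. length zs = s \<Longrightarrow> g zs = 0"
  have "sh r s f g ys = sh r s f (\<lambda>zs. 0 * g zs) ys" by (rule sh_cong) (auto simp: a)
  also have "\<dots> = 0" by (simp only: sh_mul2) simp
  finally show ?thesis .
qed

lemma neg1_pow_sq: "((-1::'a::comm_ring_1) ^ n) * (-1) ^ n = 1"
  by (metis power_add power_minus1_even mult_2 dvd_triv_left even_add)

lemma neg1_pow_sq2: "((-1::'a::comm_ring_1) ^ n) * ((-1) ^ n * x) = x"
  by (simp add: mult.assoc[symmetric] neg1_pow_sq)

lemma sh_comm: "sh r s f g ys = (-1) ^ (r * s) * sh s r g f ys"
proof (induction ys arbitrary: r s f g)
  case Nil then show ?case by (auto simp: mult.commute)
next
  case (Cons y ys)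
  show ?case
  proof (cases r)
    case 0
    then show ?thesis
    proof (cases s)
      case 0 then show ?thesis using `r = 0` by simp
    next
      case (Suc s')
      have "sh 0 s' f (\<lambda>zs. g (y # zs)) ys = sh s' 0 (\<lambda>zs. g (y # zs)) f ys"
        using Cons.IH[of 0 s'] by simp
      then show ?thesis using `r = 0` Suc by simp
    qed
  next
    case (Suc r')
    then show ?thesis
    proof (cases s)
      case 0
      have "sh r' 0 (\<lambda>zs. f (y # zs)) g ys = sh 0 r' g (\<lambda>zs. f (y # zs)) ys"
        using Cons.IH[of r' 0] by simp
      then show ?thesis using Suc 0 by simp
    next
      case (Suc s')
      let ?A = "sh (Suc s') r' g (\<lambda>zs. f (y # zs)) ys"
      let ?B = "sh s' (Suc r') (\<lambda>zs. g (y # zs)) f ys"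
      have I1: "sh r' (Suc s') (\<lambda>zs. f (y # zs)) g ys = (-1) ^ (r' * Suc s') * ?A"
        by (rule Cons.IH)
      have I2: "sh (Suc r') s' f (\<lambda>zs. g (y # zs)) ys = (-1) ^ (Suc r' * s') * ?B"
        by (rule Cons.IH)
      have L: "sh (Suc r') (Suc s') f g (y # ys) = (-1) ^ Suc s' * ((-1) ^ (r' * Suc s') * ?A) + (-1) ^ (Suc r' * s') * ?B"
        using I1 I2 by simp
      have R: "sh (Suc s') (Suc r') g f (y # ys) = (-1) ^ Suc r' * ?B + ?A" by simp
      have e1: "(-1::'a) ^ Suc s' * (-1) ^ (r' * Suc s') = (-1) ^ (Suc r' * Suc s')"
        by (simp add: power_add[symmetric] add_ac)
      have e2: "(-1::'a) ^ (Suc r' * s') = (-1) ^ (Suc r' * Suc s') * (-1) ^ Suc r'"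
      proof -
        have "(-1::'a) ^ (Suc r' * Suc s') = (-1) ^ (Suc r' * s') * (-1) ^ Suc r'"
          by (metis mult_Suc_right power_add add.commute)
        then show ?thesis using neg1_pow_sq[of "Suc r'", where 'a='a] by (simp add: algebra_simps)
      qed
      show ?thesis unfolding L R `r = Suc r'` Suc
        by (simp only: e2 ring_distribs mult.assoc[symmetric] e1) (simp add: algebra_simps)
    qed
  qed
qed

lemma sh_assoc: "sh (r + s) t (sh r s f g) h ys = sh r (s + t) f (sh s t g h) ys"
proof (induction ys arbitrary: r s t f g h)
  case Nil then show ?case by auto
next
  case (Cons y ys)
  note a = Cons.IH[of "r - 1" s t "\<lambda>zs. f (y # zs)" g h]
  note b = Cons.IH[of r "s - 1" t f "\<lambda>zs. g (y # zs)" h]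
  note c = Cons.IH[of r s "t - 1" f g "\<lambda>zs. h (y # zs)"]
  show ?case
    using a b c
    by (cases r; cases s; cases t) (simp_all add: sh_add1 sh_add2 sh_mul1 sh_mul2 sh_neg1 sh_neg2 sh_diff1 sh_diff2 algebra_simps power_add)
qed


definition swp :: "nat \<Rightarrow> 'e list \<Rightarrow> 'e list" where
  "swp i ys = ys[i := ys ! (i + 1), i + 1 := ys ! i]"
definition rmv :: "nat \<Rightarrow> 'e list \<Rightarrow> 'e list" where
  "rmv i ys = take i ys @ drop (i + 2) ys"

definition symb :: "('e \<Rightarrow> 'e \<Rightarrow> 'a::comm_ring_1) \<Rightarrow> nat \<Rightarrow> ('e list \<Rightarrow> 'a) \<Rightarrow> ('e list \<Rightarrow> 'a \<Rightarrow> 'a) \<Rightarrow> bool" where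
  "symb P r f \<sigma> \<longleftrightarrow> (\<forall>ys i. length ys = r \<longrightarrow> i + 1 < r \<longrightarrow>
      f ys + f (swp i ys) = \<sigma> (rmv i ys) (P (ys ! i) (ys ! (i + 1))))"

definition rho :: "nat \<Rightarrow> nat \<Rightarrow> ('e list \<Rightarrow> 'a::comm_ring_1) \<Rightarrow> ('e list \<Rightarrow> 'a) \<Rightarrow>
   ('e list \<Rightarrow> 'a \<Rightarrow> 'a) \<Rightarrow> ('e list \<Rightarrow> 'a \<Rightarrow> 'a) \<Rightarrow> 'e list \<Rightarrow> 'a \<Rightarrow> 'a" where
  "rho r s f g \<sigma> \<tau> zs a = (if 2 \<le> r then sh (r - 2) s (\<lambda>ws. \<sigma> ws a) g zs else 0) +
                          (if 2 \<le> s then sh r (s - 2) f (\<lambda>ws. \<tau> ws a) zs else 0)"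

lemma swp_cons: "swp (Suc i) (y # ys) = y # swp i ys"
  by (simp add: swp_def)
lemma rmv_cons: "rmv (Suc i) (y # ys) = y # rmv i ys"
  by (simp add: rmv_def)

lemma symb_cons: "symb P r f \<sigma> \<Longrightarrow> symb P (r - 1) (\<lambda>zs. f (y # zs)) (\<lambda>zs. \<sigma> (y # zs))"
  unfolding symb_def
  apply (intro allI impI)
  subgoal for ys i
    apply (drule spec[of _ "y # ys"], drule spec[of _ "Suc i"])
    by (auto simp: swp_cons rmv_cons)
  done

lemma symb_0: "symb P r f \<sigma> \<Longrightarrow> length ws + 2 = r \<Longrightarrow>
   f (a # b # ws) + f (b # a # ws) = \<sigma> ws (P a b)"
  unfolding symb_def
  apply (drule spec[of _ "a # b # ws"], drule spec[of _ 0])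
  by (simp add: swp_def rmv_def)

lemma expand2: "sh r s f g (a # b # zs) =
   (if 2 \<le> r then sh (r - 2) s (\<lambda>zs. f (a # b # zs)) g zs else 0) +
   (if 0 < r \<and> 0 < s then (-1) ^ s * (sh (r - 1) (s - 1) (\<lambda>zs. f (a # zs)) (\<lambda>zs. g (b # zs)) zs
        - sh (r - 1) (s - 1) (\<lambda>zs. f (b # zs)) (\<lambda>zs. g (a # zs)) zs) else 0) +
   (if 2 \<le> s then sh r (s - 2) f (\<lambda>zs. g (a # b # zs)) zs else 0)"
  by (cases r; cases s) (auto simp: algebra_simps neg1_pow_sq neg1_pow_sq2)

lemma swap0_sum: "sh r s f g (a # b # zs) + sh r s f g (b # a # zs) =
   (if 2 \<le> r then sh (r - 2) s (\<lambda>zs. f (a # b # zs)) g zs + sh (r - 2) s (\<lambda>zs. f (b # a # zs)) g zs else 0) +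
   (if 2 \<le> s then sh r (s - 2) f (\<lambda>zs. g (a # b # zs)) zs + sh r (s - 2) f (\<lambda>zs. g (b # a # zs)) zs else 0)"
  unfolding expand2[of r s f g a b zs] expand2[of r s f g b a zs]
  by (cases "2 \<le> r"; cases "2 \<le> s"; cases "0 < r \<and> 0 < s") (auto simp: algebra_simps)

lemma nat3: "r = 0 \<or> r = 1 \<or> r = 2 \<or> (\<exists>k. r = Suc (Suc (Suc k)))"
  by presburger

lemma rho_cons: "rho r s f g \<sigma> \<tau> (y # zs) a =
   (if 0 < r then (-1) ^ s * rho (r - 1) s (\<lambda>zs. f (y # zs)) g (\<lambda>zs. \<sigma> (y # zs)) \<tau> zs a else 0) +
   (if 0 < s then rho r (s - 1) f (\<lambda>zs. g (y # zs)) \<sigma> (\<lambda>zs. \<tau> (y # zs)) zs a else 0)"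
  unfolding rho_def
  using nat3[of r] nat3[of s]
  by (elim disjE exE) (simp_all add: algebra_simps neg1_pow_sq neg1_pow_sq2)

lemma sh_symb: "symb P r f \<sigma> \<Longrightarrow> symb P s g \<tau> \<Longrightarrow> symb P (r + s) (sh r s f g) (rho r s f g \<sigma> \<tau>)"
proof -
  have "\<And>i. symb P r f \<sigma> \<Longrightarrow> symb P s g \<tau> \<Longrightarrow> length ys = r + s \<Longrightarrow> i + 1 < r + s \<Longrightarrow>
     sh r s f g ys + sh r s f g (swp i ys) = rho r s f g \<sigma> \<tau> (rmv i ys) (P (ys ! i) (ys ! (i + 1)))" for ys
  proof (induction ys arbitrary: r s f g \<sigma> \<tau> i)
    case Nil then show ?case by simp
  next
    case (Cons y ys)
    show ?case
    proof (cases i)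
      case 0
      then obtain y2 zs where ys: "ys = y2 # zs" using Cons.prems by (cases ys) auto
      have F: "2 \<le> r \<Longrightarrow> sh (r - 2) s (\<lambda>zs. f (y # y2 # zs)) g zs + sh (r - 2) s (\<lambda>zs. f (y2 # y # zs)) g zs
            = sh (r - 2) s (\<lambda>ws. \<sigma> ws (P y y2)) g zs"
        by (subst sh_add1[symmetric], rule sh_cong) (auto intro: symb_0[OF Cons.prems(1)])
      have G: "2 \<le> s \<Longrightarrow> sh r (s - 2) f (\<lambda>zs. g (y # y2 # zs)) zs + sh r (s - 2) f (\<lambda>zs. g (y2 # y # zs)) zs
            = sh r (s - 2) f (\<lambda>ws. \<tau> ws (P y y2)) zs"
        by (subst sh_add2[symmetric], rule sh_cong) (auto intro: symb_0[OF Cons.prems(2)])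
      have e: "swp 0 (y # y2 # zs) = y2 # y # zs" "rmv 0 (y # y2 # zs) = zs"
        by (simp_all add: swp_def rmv_def)
      show ?thesis unfolding 0 ys e swap0_sum
        by (cases "2 \<le> r"; cases "2 \<le> s") (simp_all add: F G rho_def)
    next
      case (Suc j)
      have l: "length ys = r + s - 1" "j + 1 < r + s - 1" using Cons.prems Suc by auto
      have A: "0 < r \<Longrightarrow> sh (r - 1) s (\<lambda>zs. f (y # zs)) g ys + sh (r - 1) s (\<lambda>zs. f (y # zs)) g (swp j ys)
          = rho (r - 1) s (\<lambda>zs. f (y # zs)) g (\<lambda>zs. \<sigma> (y # zs)) \<tau> (rmv j ys) (P (ys ! j) (ys ! (j + 1)))"
        by (rule Cons.IH) (use l symb_cons[OF Cons.prems(1)] Cons.prems(2) in auto)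
      have B: "0 < s \<Longrightarrow> sh r (s - 1) f (\<lambda>zs. g (y # zs)) ys + sh r (s - 1) f (\<lambda>zs. g (y # zs)) (swp j ys)
          = rho r (s - 1) f (\<lambda>zs. g (y # zs)) \<sigma> (\<lambda>zs. \<tau> (y # zs)) (rmv j ys) (P (ys ! j) (ys ! (j + 1)))"
        by (rule Cons.IH) (use l symb_cons[OF Cons.prems(2)] Cons.prems(1) in auto)
      have "sh r s f g (y # ys) + sh r s f g (y # swp j ys) =
         (if 0 < r then (-1) ^ s * (sh (r - 1) s (\<lambda>zs. f (y # zs)) g ys + sh (r - 1) s (\<lambda>zs. f (y # zs)) g (swp j ys)) else 0) +
         (if 0 < s then sh r (s - 1) f (\<lambda>zs. g (y # zs)) ys + sh r (s - 1) f (\<lambda>zs. g (y # zs)) (swp j ys) else 0)"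
        by (cases "0 < r"; cases "0 < s") (simp_all add: algebra_simps)
      also have "\<dots> = rho r s f g \<sigma> \<tau> (rmv (Suc j) (y # ys)) (P ((y # ys) ! Suc j) ((y # ys) ! (Suc j + 1)))"
        unfolding rmv_cons rho_cons using A B by (cases "0 < r"; cases "0 < s") simp_all
      finally show ?thesis unfolding Suc swp_cons .
    qed
  qed
  note H = this
  show "symb P r f \<sigma> \<Longrightarrow> symb P s g \<tau> \<Longrightarrow> symb P (r + s) (sh r s f g) (rho r s f g \<sigma> \<tau>)"
    unfolding symb_def[of P "r + s"]
    apply (intro allI impI)
    apply (rule H)
    by auto
qed


definition LL :: "('a \<Rightarrow> 'e::ab_group_add \<Rightarrow> 'e) \<Rightarrow> nat \<Rightarrow> ('e list \<Rightarrow> 'a::comm_ring_1) \<Rightarrow> bool" where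
  "LL sm r f \<longleftrightarrow> (\<forall>xs y z a. Suc (length xs) = r \<longrightarrow>
     f (xs @ [y + z]) = f (xs @ [y]) + f (xs @ [z]) \<and> f (xs @ [sm a y]) = a * f (xs @ [y]))"

lemma LL_cons: "LL sm r f \<Longrightarrow> LL sm (r - 1) (\<lambda>zs. f (y # zs))"
  unfolding LL_def
  apply (intro allI impI)
  subgoal for xs a b c
    apply (drule spec[of _ "y # xs"])
    by auto
  done

lemma sh_LL: "LL sm r f \<Longrightarrow> LL sm s g \<Longrightarrow> LL sm (r + s) (sh r s f g)"
proof -
  have H: "LL sm r f \<Longrightarrow> LL sm s g \<Longrightarrow> Suc (length xs) = r + s \<Longrightarrow>
     sh r s f g (xs @ [y + z]) = sh r s f g (xs @ [y]) + sh r s f g (xs @ [z]) \<and>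
     sh r s f g (xs @ [sm a y]) = a * sh r s f g (xs @ [y])" for xs y z a
  proof (induction xs arbitrary: r s f g)
    case Nil
    have f: "f [y + z] = f [y] + f [z] \<and> f [sm a y] = a * f [y]" if "r = 1"
      using Nil.prems(1) that unfolding LL_def by (auto dest: spec[of _ "[]"])
    have g: "g [y + z] = g [y] + g [z] \<and> g [sm a y] = a * g [y]" if "s = 1"
      using Nil.prems(2) that unfolding LL_def by (auto dest: spec[of _ "[]"])
    have "(r = 1 \<and> s = 0) \<or> (r = 0 \<and> s = 1)" using Nil.prems(3) by auto
    then show ?case using f g by (auto simp: algebra_simps)
  next
    case (Cons x xs)
    have A: "0 < r \<Longrightarrow> sh (r - 1) s (\<lambda>zs. f (x # zs)) g (xs @ [y + z]) = sh (r - 1) s (\<lambda>zs. f (x # zs)) g (xs @ [y]) + sh (r - 1) s (\<lambda>zs. f (x # zs)) g (xs @ [z]) \<and>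
       sh (r - 1) s (\<lambda>zs. f (x # zs)) g (xs @ [sm a y]) = a * sh (r - 1) s (\<lambda>zs. f (x # zs)) g (xs @ [y])"
      by (rule Cons.IH) (use Cons.prems LL_cons in auto)
    have B: "0 < s \<Longrightarrow> sh r (s - 1) f (\<lambda>zs. g (x # zs)) (xs @ [y + z]) = sh r (s - 1) f (\<lambda>zs. g (x # zs)) (xs @ [y]) + sh r (s - 1) f (\<lambda>zs. g (x # zs)) (xs @ [z]) \<and>
       sh r (s - 1) f (\<lambda>zs. g (x # zs)) (xs @ [sm a y]) = a * sh r (s - 1) f (\<lambda>zs. g (x # zs)) (xs @ [y])"
      by (rule Cons.IH) (use Cons.prems LL_cons in auto)
    show ?case using A B by (cases "0 < r"; cases "0 < s") (simp_all add: algebra_simps)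
  qed
  show "LL sm r f \<Longrightarrow> LL sm s g \<Longrightarrow> LL sm (r + s) (sh r s f g)"
    unfolding LL_def[of sm "r + s"]
    apply (intro allI impI)
    apply (rule H)
    by auto
qed

lemma LL_add: "LL sm n f \<Longrightarrow> LL sm n g \<Longrightarrow> LL sm n (\<lambda>xs. f xs + g xs)"
  unfolding LL_def by (simp add: algebra_simps)
lemma LL_cmul: "LL sm n f \<Longrightarrow> LL sm n (\<lambda>xs. c * f xs)"
  unfolding LL_def by (simp add: algebra_simps)
lemma LL_sum: "finite K \<Longrightarrow> (\<And>k. k \<in> K \<Longrightarrow> LL sm n (F k)) \<Longrightarrow> LL sm n (\<lambda>xs. \<Sum>k\<in>K. F k xs)"
proof (induction K rule: finite_induct)
  case empty then show ?case by (simp add: LL_def)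
next
  case (insert k K) then show ?case by (simp add: LL_add)
qed

lemma ml_cons: "multilin scB scE n f \<Longrightarrow> multilin scB scE (n - 1) (\<lambda>zs. f (y # zs))"
  unfolding multilin_def
  apply (intro allI impI)
  subgoal for xs i u v k
    apply (drule spec[of _ "y # xs"], drule spec[of _ "Suc i"])
    by auto
  done

lemma ml_head: "multilin scB scE n f \<Longrightarrow> length zs + 1 = n \<Longrightarrow>
   f ((u + v) # zs) = f (u # zs) + f (v # zs) \<and> f (scE k u # zs) = scB k (f (u # zs))"
  unfolding multilin_def
  apply (drule spec[of _ "u # zs"], drule spec[of _ 0])
  by auto

lemma sh_ml:
  assumes "multilin (\<lambda>k b. \<phi> k * b) scE r f" "multilin (\<lambda>k b. \<phi> k * b) scE s g"
  shows "multilin (\<lambda>k b. \<phi> k * b) scE (r + s) (sh r s f g)"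
proof -
  have H: "multilin (\<lambda>k b. \<phi> k * b) scE r f \<Longrightarrow> multilin (\<lambda>k b. \<phi> k * b) scE s g \<Longrightarrow>
     length xs = r + s \<Longrightarrow> i < r + s \<Longrightarrow>
     sh r s f g (xs[i := u + v]) = sh r s f g (xs[i := u]) + sh r s f g (xs[i := v]) \<and>
     sh r s f g (xs[i := scE k u]) = \<phi> k * sh r s f g (xs[i := u])" for xs i u v k
  proof (induction xs arbitrary: r s f g i)
    case Nil then show ?case by simp
  next
    case (Cons y ys)
    show ?case
    proof (cases i)
      case 0
      have F1: "0 < r \<Longrightarrow> sh (r - 1) s (\<lambda>zs. f ((u + v) # zs)) g ys = sh (r - 1) s (\<lambda>zs. f (u # zs)) g ys + sh (r - 1) s (\<lambda>zs. f (v # zs)) g ys"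
        by (subst sh_add1[symmetric], rule sh_cong) (use ml_head[OF Cons.prems(1)] in auto)
      have F2: "0 < r \<Longrightarrow> sh (r - 1) s (\<lambda>zs. f (scE k u # zs)) g ys = \<phi> k * sh (r - 1) s (\<lambda>zs. f (u # zs)) g ys"
        by (subst sh_mul1[symmetric], rule sh_cong) (use ml_head[OF Cons.prems(1)] in auto)
      have G1: "0 < s \<Longrightarrow> sh r (s - 1) f (\<lambda>zs. g ((u + v) # zs)) ys = sh r (s - 1) f (\<lambda>zs. g (u # zs)) ys + sh r (s - 1) f (\<lambda>zs. g (v # zs)) ys"
        by (subst sh_add2[symmetric], rule sh_cong) (use ml_head[OF Cons.prems(2)] in auto)
      have G2: "0 < s \<Longrightarrow> sh r (s - 1) f (\<lambda>zs. g (scE k u # zs)) ys = \<phi> k * sh r (s - 1) f (\<lambda>zs. g (u # zs)) ys"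
        by (subst sh_mul2[symmetric], rule sh_cong) (use ml_head[OF Cons.prems(2)] in auto)
      show ?thesis unfolding 0 using F1 F2 G1 G2
        by (cases "0 < r"; cases "0 < s") (simp_all add: algebra_simps)
    next
      case (Suc j)
      have A: "0 < r \<Longrightarrow> sh (r - 1) s (\<lambda>zs. f (y # zs)) g (ys[j := u + v]) = sh (r - 1) s (\<lambda>zs. f (y # zs)) g (ys[j := u]) + sh (r - 1) s (\<lambda>zs. f (y # zs)) g (ys[j := v]) \<and>
         sh (r - 1) s (\<lambda>zs. f (y # zs)) g (ys[j := scE k u]) = \<phi> k * sh (r - 1) s (\<lambda>zs. f (y # zs)) g (ys[j := u])"
        by (rule Cons.IH) (use Cons.prems Suc ml_cons in auto)
      have B: "0 < s \<Longrightarrow> sh r (s - 1) f (\<lambda>zs. g (y # zs)) (ys[j := u + v]) = sh r (s - 1) f (\<lambda>zs. g (y # zs)) (ys[j := u]) + sh r (s - 1) f (\<lambda>zs. g (y # zs)) (ys[j := v]) \<and>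
         sh r (s - 1) f (\<lambda>zs. g (y # zs)) (ys[j := scE k u]) = \<phi> k * sh r (s - 1) f (\<lambda>zs. g (y # zs)) (ys[j := u])"
        by (rule Cons.IH) (use Cons.prems Suc ml_cons in auto)
      show ?thesis unfolding Suc using A B
        by (cases "0 < r"; cases "0 < s") (simp_all add: algebra_simps)
    qed
  qed
  show ?thesis unfolding multilin_def
    apply (intro allI impI)
    apply (rule H)
    using assms by auto
qed

lemma ml_add: fixes \<phi> :: "'r \<Rightarrow> 'a::comm_ring_1" shows "multilin (\<lambda>k b. \<phi> k * b) scE n f \<Longrightarrow> multilin (\<lambda>k b. \<phi> k * b) scE n g \<Longrightarrow>
   multilin (\<lambda>k b. \<phi> k * b) scE n (\<lambda>xs. f xs + g xs)"
  unfolding multilin_def by (simp add: algebra_simps)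
lemma ml_cmul: fixes \<phi> :: "'r \<Rightarrow> 'a::comm_ring_1" shows "multilin (\<lambda>k b. \<phi> k * b) scE n f \<Longrightarrow> multilin (\<lambda>k b. \<phi> k * b) scE n (\<lambda>xs. c * f xs)"
  unfolding multilin_def by (simp add: algebra_simps)
lemma ml_zero: fixes \<phi> :: "'r \<Rightarrow> 'a::comm_ring_1" shows "multilin (\<lambda>k b. \<phi> k * b) scE n (\<lambda>xs. 0)"
  unfolding multilin_def by simp
lemma ml_sum: fixes \<phi> :: "'r \<Rightarrow> 'a::comm_ring_1" shows "finite K \<Longrightarrow> (\<And>k. k \<in> K \<Longrightarrow> multilin (\<lambda>k b. \<phi> k * b) scE n (F k)) \<Longrightarrow>
   multilin (\<lambda>k b. \<phi> k * b) scE n (\<lambda>xs. \<Sum>k\<in>K. F k xs)"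
proof (induction K rule: finite_induct)
  case empty then show ?case by (simp add: ml_zero)
next
  case (insert k K) then show ?case by (simp add: ml_add)
qed

lemma symb_add: "symb P n f \<sigma> \<Longrightarrow> symb P n g \<tau> \<Longrightarrow> symb P n (\<lambda>xs. f xs + g xs) (\<lambda>zs a. \<sigma> zs a + \<tau> zs a)"
  unfolding symb_def by (simp add: algebra_simps)
lemma symb_sum: "finite K \<Longrightarrow> (\<And>k. k \<in> K \<Longrightarrow> symb P n (F k) (S k)) \<Longrightarrow>
   symb P n (\<lambda>xs. \<Sum>k\<in>K. F k xs) (\<lambda>zs a. \<Sum>k\<in>K. S k zs a)"
proof (induction K rule: finite_induct)
  case empty then show ?case by (simp add: symb_def)
next
  case (insert k K) then show ?case by (simp add: symb_add)
qed

lemma der_addD: "is_der \<iota> D \<Longrightarrow> D (a + b) = D a + D b"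
  unfolding is_der_def by blast
lemma der_smulD: "is_der \<iota> D \<Longrightarrow> D (\<iota> k * a) = \<iota> k * D a"
  unfolding is_der_def by blast
lemma der_multD: "is_der \<iota> D \<Longrightarrow> D (a * b) = a * D b + D a * b"
  unfolding is_der_def by blast
lemma der_add: "is_der \<iota> D \<Longrightarrow> is_der \<iota> E \<Longrightarrow> is_der \<iota> (\<lambda>a. D a + E a)"
  unfolding is_der_def[of \<iota> "\<lambda>a. D a + E a"]
  apply (intro conjI allI)
  subgoal for a b by (simp only: der_addD[of \<iota> D] der_addD[of \<iota> E]) (simp add: algebra_simps)
  subgoal for k a by (simp only: der_smulD[of \<iota> D] der_smulD[of \<iota> E]) (simp add: algebra_simps)
  subgoal for a b by (simp only: der_multD[of \<iota> D] der_multD[of \<iota> E]) (simp add: algebra_simps)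
  done
lemma der_zero: "is_der \<iota> (\<lambda>a. 0)"
  unfolding is_der_def by simp
lemma der_sum: "finite K \<Longrightarrow> (\<And>k. k \<in> K \<Longrightarrow> is_der \<iota> (D k)) \<Longrightarrow> is_der \<iota> (\<lambda>a. \<Sum>k\<in>K. D k a)"
proof (induction K rule: finite_induct)
  case empty then show ?case by (simp add: der_zero)
next
  case (insert k K) then show ?case by (simp add: der_add)
qed

lemma rho_der:
  assumes "\<And>ws. length ws + 2 = r \<Longrightarrow> is_der \<iota> (\<sigma> ws)" "\<And>ws. length ws + 2 = s \<Longrightarrow> is_der \<iota> (\<tau> ws)"
    and "length zs + 2 = r + s"
  shows "is_der \<iota> (rho r s f g \<sigma> \<tau> zs)"
proof -
  have d1: "is_der \<iota> (\<lambda>a. sh (r - 2) s (\<lambda>ws. \<sigma> ws a) g zs)" if "2 \<le> r"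
    unfolding is_der_def
  proof (intro conjI allI)
    fix a b
    show "sh (r - 2) s (\<lambda>ws. \<sigma> ws (a + b)) g zs = sh (r - 2) s (\<lambda>ws. \<sigma> ws a) g zs + sh (r - 2) s (\<lambda>ws. \<sigma> ws b) g zs"
      by (subst sh_add1[symmetric], rule sh_cong) (use that in \<open>auto simp: der_addD[OF assms(1)] der_smulD[OF assms(1)]\<close>)
    show "sh (r - 2) s (\<lambda>ws. \<sigma> ws (a * b)) g zs = a * sh (r - 2) s (\<lambda>ws. \<sigma> ws b) g zs + sh (r - 2) s (\<lambda>ws. \<sigma> ws a) g zs * b"
    proof -
      have "sh (r - 2) s (\<lambda>ws. \<sigma> ws (a * b)) g zs = sh (r - 2) s (\<lambda>ws. a * \<sigma> ws b + b * \<sigma> ws a) g zs"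
        by (rule sh_cong) (use that in \<open>auto simp: der_multD[OF assms(1)] mult.commute\<close>)
      then show ?thesis by (simp add: sh_add1 sh_mul1 mult.commute)
    qed
  next
    fix k a
    show "sh (r - 2) s (\<lambda>ws. \<sigma> ws (\<iota> k * a)) g zs = \<iota> k * sh (r - 2) s (\<lambda>ws. \<sigma> ws a) g zs"
      by (subst sh_mul1[symmetric], rule sh_cong) (use that in \<open>auto simp: der_addD[OF assms(1)] der_smulD[OF assms(1)]\<close>)
  qed
  have d2: "is_der \<iota> (\<lambda>a. sh r (s - 2) f (\<lambda>ws. \<tau> ws a) zs)" if "2 \<le> s"
    unfolding is_der_def
  proof (intro conjI allI)
    fix a b
    show "sh r (s - 2) f (\<lambda>ws. \<tau> ws (a + b)) zs = sh r (s - 2) f (\<lambda>ws. \<tau> ws a) zs + sh r (s - 2) f (\<lambda>ws. \<tau> ws b) zs"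
      by (subst sh_add2[symmetric], rule sh_cong) (use that in \<open>auto simp: der_addD[OF assms(2)] der_smulD[OF assms(2)]\<close>)
    show "sh r (s - 2) f (\<lambda>ws. \<tau> ws (a * b)) zs = a * sh r (s - 2) f (\<lambda>ws. \<tau> ws b) zs + sh r (s - 2) f (\<lambda>ws. \<tau> ws a) zs * b"
    proof -
      have "sh r (s - 2) f (\<lambda>ws. \<tau> ws (a * b)) zs = sh r (s - 2) f (\<lambda>ws. a * \<tau> ws b + b * \<tau> ws a) zs"
        by (rule sh_cong) (use that in \<open>auto simp: der_multD[OF assms(2)] mult.commute\<close>)
      then show ?thesis by (simp add: sh_add2 sh_mul2 mult.commute)
    qed
  next
    fix k a
    show "sh r (s - 2) f (\<lambda>ws. \<tau> ws (\<iota> k * a)) zs = \<iota> k * sh r (s - 2) f (\<lambda>ws. \<tau> ws a) zs"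
      by (subst sh_mul2[symmetric], rule sh_cong) (use that in \<open>auto simp: der_addD[OF assms(2)] der_smulD[OF assms(2)]\<close>)
  qed
  have "is_der \<iota> (\<lambda>a. (if 2 \<le> r then sh (r - 2) s (\<lambda>ws. \<sigma> ws a) g zs else 0) + (if 2 \<le> s then sh r (s - 2) f (\<lambda>ws. \<tau> ws a) zs else 0))"
    using d1 d2 der_add der_zero by (cases "2 \<le> r"; cases "2 \<le> s") simp_all
  then show ?thesis unfolding rho_def[abs_def] by simp
qed

lemma rho_ml:
  assumes "multilin (\<lambda>k b. \<phi> k * b) scE r f" "multilin (\<lambda>k b. \<phi> k * b) scE s g"
    "multilin (\<lambda>k b. \<phi> k * b) scE (r - 2) (\<lambda>ws. \<sigma> ws a)" "multilin (\<lambda>k b. \<phi> k * b) scE (s - 2) (\<lambda>ws. \<tau> ws a)"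
  shows "multilin (\<lambda>k b. \<phi> k * b) scE (r + s - 2) (\<lambda>zs. rho r s f g \<sigma> \<tau> zs a)"
proof -
  have 1: "multilin (\<lambda>k b. \<phi> k * b) scE (r + s - 2) (\<lambda>zs. sh (r - 2) s (\<lambda>ws. \<sigma> ws a) g zs)" if "2 \<le> r"
    using sh_ml[OF assms(3) assms(2)] that by (simp add: algebra_simps)
  have 2: "multilin (\<lambda>k b. \<phi> k * b) scE (r + s - 2) (\<lambda>zs. sh r (s - 2) f (\<lambda>ws. \<tau> ws a) zs)" if "2 \<le> s"
    using sh_ml[OF assms(1) assms(4)] that by (simp add: algebra_simps)
  show ?thesis unfolding rho_def
    using 1 2 ml_add ml_zero by (cases "2 \<le> r"; cases "2 \<le> s") simp_all
qed


definition Fc :: "('e \<Rightarrow> 'e \<Rightarrow> 'a) \<Rightarrow> ('a::comm_ring_1, 'e::ab_group_add) cdot \<Rightarrow> nat \<Rightarrow> 'e list \<Rightarrow> 'a" where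
  "Fc B u n ys = (case u of (a, x, c) \<Rightarrow>
     if n = 0 then a else if n = 1 then B x (hd ys) else B (c n (butlast ys)) (last ys))"

definition toC :: "(('e \<Rightarrow> 'a) \<Rightarrow> 'e) \<Rightarrow> (nat \<Rightarrow> 'e list \<Rightarrow> 'a) \<Rightarrow> ('a::comm_ring_1, 'e::ab_group_add) cdot" where
  "toC Bi P = (P 0 [], Bi (\<lambda>y. P 1 [y]),
     \<lambda>n xs. if n < 2 \<or> length xs + 1 \<noteq> n then 0 else Bi (\<lambda>y. P n (xs @ [y])))"

definition Pw :: "('e \<Rightarrow> 'e \<Rightarrow> 'a) \<Rightarrow> ('a::comm_ring_1, 'e::ab_group_add) cdot \<Rightarrow> ('a, 'e) cdot \<Rightarrow> nat \<Rightarrow> 'e list \<Rightarrow> 'a" where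
  "Pw B u v n ys = (\<Sum>r\<le>n. sh r (n - r) (Fc B u r) (Fc B v (n - r)) ys)"

definition Wd :: "('e \<Rightarrow> 'e \<Rightarrow> 'a) \<Rightarrow> ('a::comm_ring_1, 'e::ab_group_add) cdot \<Rightarrow> ('a, 'e) cdot \<Rightarrow> ('a, 'e) cdot" where
  "Wd B u v = toC (inv_into UNIV B) (Pw B u v)"

definition shaped :: "('a::comm_ring_1, 'e::ab_group_add) cdot \<Rightarrow> bool" where
  "shaped u \<longleftrightarrow> (case u of (a, x, c) \<Rightarrow> \<forall>n xs. (n < 2 \<or> length xs + 1 \<noteq> n) \<longrightarrow> c n xs = 0)"

definition fhom :: "('e \<Rightarrow> 'e \<Rightarrow> 'a) \<Rightarrow> nat \<Rightarrow> ('a::comm_ring_1, 'e::ab_group_add) cdot \<Rightarrow> bool" where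
  "fhom B r u \<longleftrightarrow> (\<forall>r' ys. r' \<noteq> r \<longrightarrow> length ys = r' \<longrightarrow> Fc B u r' ys = 0)"

lemma module_mult: "module ((*) :: 'a::comm_ring_1 \<Rightarrow> 'a \<Rightarrow> 'a)"
  by unfold_locales (simp_all add: algebra_simps)

locale wctx =
  fixes \<iota> :: "'r::comm_ring_1 \<Rightarrow> 'a::comm_ring_1"
    and sm :: "'a \<Rightarrow> 'e::ab_group_add \<Rightarrow> 'e"
    and B :: "'e \<Rightarrow> 'e \<Rightarrow> 'a"
  assumes hom: "ring_hom_fn \<iota>" and md: "module sm" and sb: "sym_bilinear sm B"
    and nd: "strongly_nondeg sm B"
begin

abbreviation "Bi \<equiv> inv_into UNIV B"
abbreviation "ML n f \<equiv> multilin (\<lambda>k b. \<iota> k * b) (\<lambda>k y. sm (\<iota> k) y) n f"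

lemma Bsym: "B x y = B y x" using sb unfolding sym_bilinear_def by blast
lemma Badd1: "B (x + y) z = B x z + B y z" using sb unfolding sym_bilinear_def by blast
lemma Bsm1: "B (sm a x) y = a * B x y" using sb unfolding sym_bilinear_def by blast
lemma Badd2: "B x (y + z) = B x y + B x z" using sb unfolding sym_bilinear_def by blast
lemma Bsm2: "B x (sm a y) = a * B x y" using sb unfolding sym_bilinear_def by blast
lemma B0l[simp]: "B 0 y = 0"
  using Badd1[of 0 0 y] by simp
lemma B0r[simp]: "B x 0 = 0"
  using Badd2[of x 0 0] by simp
lemma Bneg1: "B (- x) y = - B x y"
  using Badd1[of x "- x" y] by (simp add: eq_neg_iff_add_eq_0 add.commute)

lemma smadd1: "sm a (x + y) = sm a x + sm a y" using md by (rule module.scale_right_distrib)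
lemma smadd2: "sm (a + b) x = sm a x + sm b x" using md by (rule module.scale_left_distrib)
lemma smsm: "sm a (sm b x) = sm (a * b) x" using md by (rule module.scale_scale)
lemma sm1: "sm 1 x = x" using md by (rule module.scale_one)
lemma sm0l[simp]: "sm 0 x = 0" using md by (rule module.scale_zero_left)
lemma sm0r[simp]: "sm a 0 = 0" using md by (rule module.scale_zero_right)

lemma iota1[simp]: "\<iota> 1 = 1" using hom unfolding ring_hom_fn_def by blast
lemma iota_add: "\<iota> (x + y) = \<iota> x + \<iota> y" using hom unfolding ring_hom_fn_def by blast
lemma iota_mult: "\<iota> (x * y) = \<iota> x * \<iota> y" using hom unfolding ring_hom_fn_def by blast
lemma iota0[simp]: "\<iota> 0 = 0" using iota_add[of 0 0] by simp
lemma iota_neg: "\<iota> (- x) = - \<iota> x"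
  using iota_add[of x "- x"] by (simp add: eq_neg_iff_add_eq_0 add.commute)
lemma iota_m1pow[simp]: "\<iota> ((-1) ^ n) = (-1) ^ n"
  by (induction n) (simp_all add: iota_mult iota_neg)

definition lin :: "('e \<Rightarrow> 'a) \<Rightarrow> bool" where
  "lin \<phi> \<longleftrightarrow> (\<forall>x y. \<phi> (x + y) = \<phi> x + \<phi> y) \<and> (\<forall>a x. \<phi> (sm a x) = a * \<phi> x)"

lemma lin_hom: "lin \<phi> \<Longrightarrow> module_hom sm (*) \<phi>"
  unfolding lin_def module_hom_def module_hom_axioms_def using md module_mult by blast

lemma B_Bi: "lin \<phi> \<Longrightarrow> B (Bi \<phi>) = \<phi>"
proof -
  assume "lin \<phi>"
  then have "\<phi> \<in> {f. module_hom sm (*) f}" using lin_hom by blast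
  then have "\<phi> \<in> range B" using nd unfolding strongly_nondeg_def bij_betw_def by simp
  then show ?thesis by (rule f_inv_into_f)
qed

lemma B_inj: "B x = B y \<Longrightarrow> x = y"
  using nd unfolding strongly_nondeg_def bij_betw_def inj_on_def by blast

lemma B_inj': "(\<And>z. B x z = B y z) \<Longrightarrow> x = y"
  by (rule B_inj) (rule ext)

lemma LL_lin: "LL sm n f \<Longrightarrow> Suc (length xs) = n \<Longrightarrow> lin (\<lambda>y. f (xs @ [y]))"
  unfolding LL_def lin_def by blast

lemma Fc_toC: "(\<And>n. LL sm n (P n)) \<Longrightarrow> length ys = n \<Longrightarrow> Fc B (toC Bi P) n ys = P n ys"
proof -
  assume L: "\<And>n. LL sm n (P n)" and l: "length ys = n"
  consider "n = 0" | "n = 1" | "n \<ge> 2" by linarith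
  then show ?thesis
  proof cases
    case 1 then show ?thesis using l by (simp add: Fc_def toC_def)
  next
    case 2
    then obtain y where ys: "ys = [y]" using l by (cases ys) auto
    have "lin (\<lambda>y. P 1 [y])" using LL_lin[OF L[of 1], of "[]"] by simp
    then show ?thesis using 2 ys by (simp add: Fc_def toC_def B_Bi)
  next
    case 3
    then obtain xs y where ys: "ys = xs @ [y]" using l by (cases ys rule: rev_cases) auto
    have ln: "Suc (length xs) = n" using l ys by simp
    have "lin (\<lambda>y. P n (xs @ [y]))" using LL_lin[OF L ln] .
    then show ?thesis using 3 ys ln by (simp add: Fc_def toC_def B_Bi)
  qed
qed

lemma shaped_toC: "shaped (toC Bi' P)"
  unfolding shaped_def toC_def by simp

lemma shaped_ext:
  assumes "shaped u" "shaped v" "\<And>n ys. length ys = n \<Longrightarrow> Fc B u n ys = Fc B v n ys"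
  shows "u = v"
proof -
  obtain a x c where u: "u = (a, x, c)" by (cases u) auto
  obtain b y d where v: "v = (b, y, d)" by (cases v) auto
  have "a = b" using assms(3)[of "[]" 0] by (simp add: u v Fc_def)
  moreover have "x = y"
    by (rule B_inj') (use assms(3)[of "[_]" 1] in \<open>simp add: u v Fc_def\<close>)
  moreover have "c = d"
  proof (intro ext)
    fix n xs
    show "c n xs = d n xs"
    proof (cases "n < 2 \<or> length xs + 1 \<noteq> n")
      case True then show ?thesis using assms(1,2) by (auto simp: u v shaped_def)
    next
      case False
      show ?thesis
      proof (rule B_inj')
        fix z
        have "length (xs @ [z]) = n" using False by simp
        from assms(3)[OF this] False show "B (c n xs) z = B (d n xs) z"
          by (simp add: u v Fc_def)
      qed
    qed
  qed
  ultimately show ?thesis using u v by simp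
qed

lemma Fc_LL: "LL sm n (Fc B u n)"
  unfolding LL_def Fc_def
  by (cases u) (auto simp: Badd2 Bsm2)

lemma Pw_LL: "LL sm n (Pw B u v n)"
  unfolding Pw_def
proof (rule LL_sum)
  fix r assume "r \<in> {..n}"
  have "LL sm (r + (n - r)) (sh r (n - r) (Fc B u r) (Fc B v (n - r)))" by (rule sh_LL[OF Fc_LL Fc_LL])
  then show "LL sm n (sh r (n - r) (Fc B u r) (Fc B v (n - r)))" using \<open>r \<in> {..n}\<close> by simp
qed simp

lemma Fc_W: "length ys = n \<Longrightarrow> Fc B (Wd B u v) n ys = Pw B u v n ys"
  unfolding Wd_def by (rule Fc_toC[OF Pw_LL])

lemma shaped_W: "shaped (Wd B u v)"
  unfolding Wd_def by (rule shaped_toC)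

lemma Fc_cadd: "Fc B (cadd u v) n = (\<lambda>ys. Fc B u n ys + Fc B v n ys)"
  by (cases u; cases v) (auto simp: Fc_def cadd_def Badd1)

lemma Fc_csc: "Fc B (csc \<iota> sm k u) n = (\<lambda>ys. \<iota> k * Fc B u n ys)"
  by (cases u) (auto simp: Fc_def csc_def Bsm1)

lemma Fc_cbrx: "length ys = n \<Longrightarrow> Fc B (cbrx B u x) n ys = Fc B u (Suc n) (x # ys)"
proof -
  assume l: "length ys = n"
  obtain a y c where u: "u = (a, y, c)" by (cases u) auto
  consider "n = 0" | "n = 1" | "n \<ge> 2" by linarith
  then show ?thesis
  proof cases
    case 1 then show ?thesis using l by (simp add: u Fc_def cbrx_def)
  next
    case 2 then obtain z where "ys = [z]" using l by (cases ys) auto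
    then show ?thesis using 2 by (simp add: u Fc_def cbrx_def numeral_2_eq_2)
  next
    case 3 then have "ys \<noteq> []" using l by auto
    then show ?thesis using 3 by (simp add: u Fc_def cbrx_def)
  qed
qed

lemma Fc_cA: "Fc B (cA a) n ys = (if n = 0 then a else 0)"
  by (simp add: Fc_def cA_def)
lemma Fc_cE: "Fc B (cE x) n ys = (if n = 1 then B x (hd ys) else 0)"
  by (simp add: Fc_def cE_def)

lemma shaped_cadd: "shaped u \<Longrightarrow> shaped v \<Longrightarrow> shaped (cadd u v)"
  by (cases u; cases v) (simp add: shaped_def cadd_def)
lemma shaped_csc: "shaped u \<Longrightarrow> shaped (csc \<iota> sm k u)"
  by (cases u) (simp add: shaped_def csc_def)
lemma shaped_cbrx: "shaped u \<Longrightarrow> shaped (cbrx B u x)"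
  by (cases u) (simp add: shaped_def cbrx_def)
lemma shaped_cA: "shaped (cA a)" by (simp add: shaped_def cA_def)
lemma shaped_cE: "shaped (cE x)" by (simp add: shaped_def cE_def)

lemma Cdot_shaped: "u \<in> Cdot \<iota> sm B \<Longrightarrow> shaped u"
proof -
  assume U: "u \<in> Cdot \<iota> sm B"
  obtain a x c where u: "u = (a, x, c)" by (cases u) auto
  have h: "c 0 = (\<lambda>_. 0)" "c 1 = (\<lambda>_. 0)" "\<And>r. r \<ge> 2 \<Longrightarrow> cochain \<iota> sm B r (c r)"
    using U by (auto simp: Cdot_def u)
  show ?thesis unfolding shaped_def u
  proof (simp only: prod.case, intro allI impI)
    fix n and xs :: "'e list" assume n: "n < 2 \<or> length xs + 1 \<noteq> n"
    show "c n xs = 0"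
    proof (cases "n < 2")
      case True then have "n = 0 \<or> n = 1" by auto
      then show ?thesis using h(1,2) by auto
    next
      case False
      then have "cochain \<iota> sm B n (c n)" using h(3) by auto
      then show ?thesis using n False unfolding cochain_def by auto
    qed
  qed
qed

lemma fhom_cA: "fhom B 0 (cA a)" by (simp add: fhom_def Fc_cA)
lemma fhom_cE: "fhom B 1 (cE x)" by (simp add: fhom_def Fc_cE)

lemma homog_fhom: "homog \<iota> sm B r u \<Longrightarrow> fhom B r u"
  unfolding homog_def fhom_def Fc_def
  by (cases u) auto

lemma fhom_cbrx: "fhom B r u \<Longrightarrow> 0 < r \<Longrightarrow> fhom B (r - 1) (cbrx B u x)"
  unfolding fhom_def by (auto simp: Fc_cbrx)

lemma fhom_cbrx0: "fhom B 0 u \<Longrightarrow> length ys = n \<Longrightarrow> Fc B (cbrx B u x) n ys = 0"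
  unfolding fhom_def by (auto simp: Fc_cbrx)

lemma Pw_hom:
  assumes "fhom B r u" "fhom B s v"
  shows "Pw B u v n ys = (if n = r + s then sh r s (Fc B u r) (Fc B v s) ys else 0)"
proof -
  have "Pw B u v n ys = (\<Sum>r'\<in>{..n}. if r' = r then (if n = r + s then sh r s (Fc B u r) (Fc B v s) ys else 0) else 0)"
    unfolding Pw_def
  proof (rule sum.cong)
    fix r' assume r': "r' \<in> {..n}"
    show "sh r' (n - r') (Fc B u r') (Fc B v (n - r')) ys =
      (if r' = r then (if n = r + s then sh r s (Fc B u r) (Fc B v s) ys else 0) else 0)"
    proof (cases "r' = r")
      case False then show ?thesis using assms(1) by (auto simp: fhom_def intro: sh_zero1)
    next
      case True
      show ?thesis
      proof (cases "n = r + s")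
        case True2: True then show ?thesis using True by simp
      next
        case False
        then have "n - r' \<noteq> s" using True r' by auto
        then show ?thesis using assms(2) False True by (auto simp: fhom_def intro: sh_zero2)
      qed
    qed
  qed simp
  also have "\<dots> = (if n = r + s then sh r s (Fc B u r) (Fc B v s) ys else 0)"
    by (simp add: sum.delta)
  finally show ?thesis .
qed

lemma Pw_zero1: "(\<And>r' ys. length ys = r' \<Longrightarrow> Fc B u r' ys = 0) \<Longrightarrow> Pw B u v n ys = 0"
  unfolding Pw_def by (auto intro!: sum.neutral sh_zero1)

definition good :: "nat \<Rightarrow> ('e list \<Rightarrow> 'a) \<Rightarrow> bool" where
  "good n f \<longleftrightarrow> ML n f \<and> LL sm n f \<and> (\<exists>\<sigma>. symb B n f \<sigma> \<and> (\<forall>a. ML (n - 2) (\<lambda>ws. \<sigma> ws a)) \<and>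
      (\<forall>ws. length ws + 2 = n \<longrightarrow> is_der \<iota> (\<sigma> ws)))"

lemma good_sh: "good r f \<Longrightarrow> good s g \<Longrightarrow> good (r + s) (sh r s f g)"
proof -
  assume gf: "good r f" and gg: "good s g"
  from gf obtain \<sigma> where f: "ML r f" "LL sm r f" "symb B r f \<sigma>" "\<And>a. ML (r - 2) (\<lambda>ws. \<sigma> ws a)"
    "\<And>ws. length ws + 2 = r \<Longrightarrow> is_der \<iota> (\<sigma> ws)" unfolding good_def by blast
  from gg obtain \<tau> where g: "ML s g" "LL sm s g" "symb B s g \<tau>" "\<And>a. ML (s - 2) (\<lambda>ws. \<tau> ws a)"
    "\<And>ws. length ws + 2 = s \<Longrightarrow> is_der \<iota> (\<tau> ws)" unfolding good_def by blast
  show ?thesis unfolding good_def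
  proof (intro conjI exI[of _ "rho r s f g \<sigma> \<tau>"] allI impI)
    show "ML (r + s) (sh r s f g)" by (rule sh_ml[OF f(1) g(1)])
    show "LL sm (r + s) (sh r s f g)" by (rule sh_LL[OF f(2) g(2)])
    show "symb B (r + s) (sh r s f g) (rho r s f g \<sigma> \<tau>)" by (rule sh_symb[OF f(3) g(3)])
    fix a show "ML (r + s - 2) (\<lambda>ws. rho r s f g \<sigma> \<tau> ws a)" by (rule rho_ml[OF f(1) g(1) f(4) g(4)])
  next
    fix ws :: "'e list" assume "length ws + 2 = r + s"
    then show "is_der \<iota> (rho r s f g \<sigma> \<tau> ws)" by (intro rho_der) (use f(5) g(5) in auto)
  qed
qed

lemma good_sum:
  assumes "finite K" "\<And>k. k \<in> K \<Longrightarrow> good n (F k)"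
  shows "good n (\<lambda>xs. \<Sum>k\<in>K. F k xs)"
proof -
  have "\<forall>k\<in>K. \<exists>\<sigma>. symb B n (F k) \<sigma> \<and> (\<forall>a. ML (n - 2) (\<lambda>ws. \<sigma> ws a)) \<and>
      (\<forall>ws. length ws + 2 = n \<longrightarrow> is_der \<iota> (\<sigma> ws))"
    using assms(2) unfolding good_def by blast
  then obtain S where S: "\<And>k. k \<in> K \<Longrightarrow> symb B n (F k) (S k) \<and> (\<forall>a. ML (n - 2) (\<lambda>ws. S k ws a)) \<and>
      (\<forall>ws. length ws + 2 = n \<longrightarrow> is_der \<iota> (S k ws))"
    by metis
  show ?thesis unfolding good_def
  proof (intro conjI exI[of _ "\<lambda>zs a. \<Sum>k\<in>K. S k zs a"] allI impI)
    show "ML n (\<lambda>xs. \<Sum>k\<in>K. F k xs)" by (rule ml_sum[OF assms(1)]) (use assms(2) in \<open>auto simp: good_def\<close>)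
    show "LL sm n (\<lambda>xs. \<Sum>k\<in>K. F k xs)" by (rule LL_sum[OF assms(1)]) (use assms(2) in \<open>auto simp: good_def\<close>)
    show "symb B n (\<lambda>xs. \<Sum>k\<in>K. F k xs) (\<lambda>zs a. \<Sum>k\<in>K. S k zs a)" by (rule symb_sum[OF assms(1)]) (use S in auto)
    fix a show "ML (n - 2) (\<lambda>ws. \<Sum>k\<in>K. S k ws a)" by (rule ml_sum[OF assms(1)]) (use S in auto)
  next
    fix ws :: "'e list" assume "length ws + 2 = n"
    then show "is_der \<iota> (\<lambda>a. \<Sum>k\<in>K. S k ws a)" by (intro der_sum[OF assms(1)]) (use S in auto)
  qed
qed

lemma good_Pw: "(\<And>r. good r (Fc B u r)) \<Longrightarrow> (\<And>r. good r (Fc B v r)) \<Longrightarrow> good n (Pw B u v n)"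
proof -
  assume gu: "\<And>r. good r (Fc B u r)" and gv: "\<And>r. good r (Fc B v r)"
  have "good n (\<lambda>ys. \<Sum>r\<in>{..n}. sh r (n - r) (Fc B u r) (Fc B v (n - r)) ys)"
  proof (rule good_sum)
    fix r assume "r \<in> {..n}"
    then show "good n (sh r (n - r) (Fc B u r) (Fc B v (n - r)))"
      using good_sh[OF gu gv, of r "n - r"] by simp
  qed simp
  then show ?thesis unfolding Pw_def[abs_def] by simp
qed

lemma swp_snoc: "i + 1 < length xs \<Longrightarrow> swp i (xs @ [y]) = swp i xs @ [y]"
  by (simp add: swp_def list_update_append nth_append)
lemma rmv_snoc: "i + 1 < length xs \<Longrightarrow> rmv i (xs @ [y]) = take i xs @ drop (i + 2) xs @ [y]"
  by (simp add: rmv_def)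
lemma swp_last2: "length zs = m \<Longrightarrow> swp m (zs @ [u, w]) = zs @ [w, u]"
  by (simp add: swp_def list_update_append nth_append)
lemma rmv_last2: "length zs = m \<Longrightarrow> rmv m (zs @ [u, w]) = zs"
  by (simp add: rmv_def)

lemma good_Fc: "u \<in> Cdot \<iota> sm B \<Longrightarrow> good n (Fc B u n)"
proof -
  assume U: "u \<in> Cdot \<iota> sm B"
  obtain a x c where u: "u = (a, x, c)" by (cases u) auto
  have h: "\<And>r. r \<ge> 2 \<Longrightarrow> cochain \<iota> sm B r (c r)"
    using U by (auto simp: Cdot_def u)
  consider "n = 0" | "n = 1" | "n \<ge> 2" by linarith
  then show ?thesis
  proof cases
    case 1
    show ?thesis unfolding good_def 1
      by (intro conjI exI[of _ "\<lambda>_ _. 0"]) (simp_all add: multilin_def LL_def symb_def)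
  next
    case 2
    have F: "Fc B u 1 = (\<lambda>ys. B x (hd ys))" by (simp add: u Fc_def[abs_def])
    have ml: "ML 1 (\<lambda>ys. B x (hd ys))"
      unfolding multilin_def
    proof (intro allI impI)
      fix xs :: "'e list" and i :: nat and v w k assume "length xs = 1" "i < 1"
      then obtain z where "xs = [z]" "i = 0" by (cases xs) auto
      then show "B x (hd (xs[i := v + w])) = B x (hd (xs[i := v])) + B x (hd (xs[i := w])) \<and>
           B x (hd (xs[i := sm (\<iota> k) v])) = \<iota> k * B x (hd (xs[i := v]))"
        by (simp add: Badd2 Bsm2)
    qed
    show ?thesis unfolding good_def 2 F
      by (intro conjI exI[of _ "\<lambda>_ _. 0"] ml) (auto simp: LL_def symb_def multilin_def Badd2 Bsm2)
  next
    case 3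
    have F: "Fc B u n = (\<lambda>ys. B (c n (butlast ys)) (last ys))" using 3 by (auto simp: u Fc_def[abs_def])
    have cc: "cochain \<iota> sm B n (c n)" using h 3 by simp
    then obtain \<sigma> where
      ml: "multilin (\<lambda>k y. sm (\<iota> k) y) (\<lambda>k y. sm (\<iota> k) y) (n - 1) (c n)" and
      s1: "\<And>a. ML (n - 2) (\<lambda>xs. \<sigma> xs a)" and
      s2: "\<And>xs. length xs = n - 2 \<Longrightarrow> is_der \<iota> (\<sigma> xs)" and
      s3: "\<And>xs u w. length xs = n - 2 \<Longrightarrow> \<sigma> xs (B u w) = B (c n (xs @ [u])) w + B u (c n (xs @ [w]))" and
      s4: "\<And>xs i u. length xs = n - 1 \<Longrightarrow> i + 1 < n - 1 \<Longrightarrow>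
            B (c n xs + c n (xs[i := xs ! (i + 1), i + 1 := xs ! i])) u =
            \<sigma> (take i xs @ drop (i + 2) xs @ [u]) (B (xs ! i) (xs ! (i + 1)))"
      unfolding cochain_def by blast
    have MLF: "ML n (\<lambda>ys. B (c n (butlast ys)) (last ys))"
      unfolding multilin_def
    proof (intro allI impI)
      fix ys :: "'e list" and i :: nat and v w k assume l: "length ys = n" and i: "i < n"
      obtain xs y where ys: "ys = xs @ [y]" using l 3 by (cases ys rule: rev_cases) auto
      have lx: "length xs = n - 1" using l ys by simp
      show "B (c n (butlast (ys[i := v + w]))) (last (ys[i := v + w])) =
            B (c n (butlast (ys[i := v]))) (last (ys[i := v])) + B (c n (butlast (ys[i := w]))) (last (ys[i := w])) \<and>
            B (c n (butlast (ys[i := sm (\<iota> k) v]))) (last (ys[i := sm (\<iota> k) v])) =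
            \<iota> k * B (c n (butlast (ys[i := v]))) (last (ys[i := v]))"
      proof (cases "i < n - 1")
        case True
        have m: "c n (xs[i := v + w]) = c n (xs[i := v]) + c n (xs[i := w]) \<and>
            c n (xs[i := sm (\<iota> k) v]) = sm (\<iota> k) (c n (xs[i := v]))"
          using ml lx True unfolding multilin_def by blast
        show ?thesis using True lx m by (simp add: ys list_update_append Badd1 Bsm1)
      next
        case False
        then have "i = length xs" using lx i by auto
        then show ?thesis by (simp add: ys list_update_append Badd2 Bsm2)
      qed
    qed
    have LLF: "LL sm n (\<lambda>ys. B (c n (butlast ys)) (last ys))"
      unfolding LL_def by (simp add: Badd2 Bsm2)
    have SY: "symb B n (\<lambda>ys. B (c n (butlast ys)) (last ys)) \<sigma>"
      unfolding symb_def
    proof (intro allI impI)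
      fix ys :: "'e list" and i assume l: "length ys = n" and i: "i + 1 < n"
      show "B (c n (butlast ys)) (last ys) + B (c n (butlast (swp i ys))) (last (swp i ys)) =
            \<sigma> (rmv i ys) (B (ys ! i) (ys ! (i + 1)))"
      proof (cases "i + 1 < n - 1")
        case True
        obtain xs y where ys: "ys = xs @ [y]" using l 3 by (cases ys rule: rev_cases) auto
        have lx: "length xs = n - 1" using l ys by simp
        have "B (c n xs + c n (swp i xs)) y = \<sigma> (take i xs @ drop (i + 2) xs @ [y]) (B (xs ! i) (xs ! (i + 1)))"
          using s4[OF lx True, of y] by (simp add: swp_def)
        then show ?thesis using True lx by (simp add: ys swp_snoc rmv_snoc nth_append Badd1)
      next
        case False
        then have ii: "i = n - 2" using i by auto
        obtain xs q where ys1: "ys = xs @ [q]" using l 3 by (cases ys rule: rev_cases) auto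
        obtain zs p where xs1: "xs = zs @ [p]" using l 3 ys1 by (cases xs rule: rev_cases) auto
        have ys: "ys = zs @ [p, q]" using ys1 xs1 by simp
        have lz: "length zs = n - 2" using l ys by simp
        have e: "butlast (zs @ [p, q]) = zs @ [p]" "butlast (zs @ [q, p]) = zs @ [q]"
          by (simp_all add: butlast_append)
        show ?thesis unfolding ys ii swp_last2[OF lz] rmv_last2[OF lz] e
          using s3[OF lz, of p q] lz by (simp add: nth_append Bsym[of p])
      qed
    qed
    show ?thesis unfolding good_def F
      using MLF LLF SY s1 s2 by auto
  qed
qed

lemma Bi_zero: "Bi (\<lambda>y. 0) = 0"
proof -
  have "lin (\<lambda>y::'e. 0::'a)" by (simp add: lin_def)
  then have "B (Bi (\<lambda>y. 0)) = (\<lambda>y. 0)" by (rule B_Bi)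
  then show ?thesis by (intro B_inj) (simp add: fun_eq_iff)
qed

lemma cochain_good:
  assumes g: "good n P" and n: "2 \<le> n"
  shows "cochain \<iota> sm B n (\<lambda>xs. if n < 2 \<or> length xs + 1 \<noteq> n then 0 else Bi (\<lambda>y. P (xs @ [y])))"
proof -
  define C where "C = (\<lambda>xs. if n < 2 \<or> length xs + 1 \<noteq> n then 0 else Bi (\<lambda>y. P (xs @ [y])))"
  from g obtain \<sigma> where P: "ML n P" "LL sm n P" "symb B n P \<sigma>" "\<And>a. ML (n - 2) (\<lambda>ws. \<sigma> ws a)"
    "\<And>ws. length ws + 2 = n \<Longrightarrow> is_der \<iota> (\<sigma> ws)" unfolding good_def by blast
  have BC: "B (C xs) y = P (xs @ [y])" if "length xs + 1 = n" for xs y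
  proof -
    have "lin (\<lambda>y. P (xs @ [y]))" using LL_lin[OF P(2)] that by simp
    then show ?thesis using n that by (simp add: C_def B_Bi)
  qed
  have ml: "multilin (\<lambda>k y. sm (\<iota> k) y) (\<lambda>k y. sm (\<iota> k) y) (n - 1) C"
    unfolding multilin_def
  proof (intro allI impI conjI)
    fix xs :: "'e list" and i :: nat and u v k assume l: "length xs = n - 1" and i: "i < n - 1"
    have l1: "length xs + 1 = n" using l n by simp
    have mP: "P (ys[i := u + v]) = P (ys[i := u]) + P (ys[i := v]) \<and> P (ys[i := sm (\<iota> k) u]) = \<iota> k * P (ys[i := u])"
      if "length ys = n" for ys using P(1) that i unfolding multilin_def by auto
    show "C (xs[i := u + v]) = C (xs[i := u]) + C (xs[i := v])"
    proof (rule B_inj')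
      fix y
      show "B (C (xs[i := u + v])) y = B (C (xs[i := u]) + C (xs[i := v])) y"
        using mP[of "xs @ [y]"] l1 l i by (simp add: BC Badd1 list_update_append)
    qed
    show "C (xs[i := sm (\<iota> k) u]) = sm (\<iota> k) (C (xs[i := u]))"
    proof (rule B_inj')
      fix y
      show "B (C (xs[i := sm (\<iota> k) u])) y = B (sm (\<iota> k) (C (xs[i := u]))) y"
        using mP[of "xs @ [y]"] l1 l i by (simp add: BC Bsm1 list_update_append)
    qed
  qed
  have s1: "\<sigma> xs (B u w) = B (C (xs @ [u])) w + B u (C (xs @ [w]))" if "length xs = n - 2" for xs u w
  proof -
    have "P (xs @ [u, w]) + P (swp (n - 2) (xs @ [u, w])) = \<sigma> (rmv (n - 2) (xs @ [u, w])) (B ((xs @ [u, w]) ! (n - 2)) ((xs @ [u, w]) ! (n - 2 + 1)))"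
      using P(3) that n unfolding symb_def by auto
    then show ?thesis using that n
      by (simp add: swp_last2 rmv_last2 nth_append BC Bsym[of u])
  qed
  have s2: "B (C xs + C (xs[i := xs ! (i + 1), i + 1 := xs ! i])) u =
            \<sigma> (take i xs @ drop (i + 2) xs @ [u]) (B (xs ! i) (xs ! (i + 1)))"
    if "length xs = n - 1" "i + 1 < n - 1" for xs i u
  proof -
    have "P (xs @ [u]) + P (swp i (xs @ [u])) = \<sigma> (rmv i (xs @ [u])) (B ((xs @ [u]) ! i) ((xs @ [u]) ! (i + 1)))"
      using P(3) that n unfolding symb_def by auto
    then show ?thesis using that n
      by (simp add: swp_snoc rmv_snoc nth_append BC Badd1) (simp add: swp_def)
  qed
  show ?thesis unfolding C_def[symmetric] cochain_def
    using n ml P(4) P(5) s1 s2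
    by (intro conjI exI[of _ \<sigma>]) (auto simp: C_def)
qed

lemma Cdot_bound: "u \<in> Cdot \<iota> sm B \<Longrightarrow> \<exists>N. \<forall>n\<ge>N. \<forall>ys. Fc B u n ys = 0"
proof -
  assume U: "u \<in> Cdot \<iota> sm B"
  obtain a x c where u: "u = (a, x, c)" by (cases u) auto
  have fin: "finite {r. c r \<noteq> (\<lambda>_. 0)}" using U by (simp add: Cdot_def u)
  define N where "N = Max (insert 0 {r. c r \<noteq> (\<lambda>_. 0)}) + 2"
  have "\<forall>n\<ge>N. \<forall>ys. Fc B u n ys = 0"
  proof (intro allI impI)
    fix n ys assume "N \<le> n"
    have "c n = (\<lambda>_. 0)"
    proof (rule ccontr)
      assume "c n \<noteq> (\<lambda>_. 0)"
      then have "n \<le> Max (insert 0 {r. c r \<noteq> (\<lambda>_. 0)})" using fin by (intro Max_ge) auto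
      then show False using \<open>N \<le> n\<close> by (simp add: N_def)
    qed
    moreover have "n \<ge> 2" using \<open>N \<le> n\<close> by (simp add: N_def)
    ultimately show "Fc B u n ys = 0" by (simp add: u Fc_def)
  qed
  then show ?thesis by blast
qed

lemma W_Cdot: "u \<in> Cdot \<iota> sm B \<Longrightarrow> v \<in> Cdot \<iota> sm B \<Longrightarrow> Wd B u v \<in> Cdot \<iota> sm B"
proof -
  assume U: "u \<in> Cdot \<iota> sm B" and V: "v \<in> Cdot \<iota> sm B"
  obtain Nu where Nu: "\<And>n ys. n \<ge> Nu \<Longrightarrow> Fc B u n ys = 0" using Cdot_bound[OF U] by blast
  obtain Nv where Nv: "\<And>n ys. n \<ge> Nv \<Longrightarrow> Fc B v n ys = 0" using Cdot_bound[OF V] by blast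
  have Pz: "Pw B u v n ys = 0" if "n \<ge> Nu + Nv" for n ys
    unfolding Pw_def
  proof (rule sum.neutral, intro ballI)
    fix r assume "r \<in> {..n}"
    show "sh r (n - r) (Fc B u r) (Fc B v (n - r)) ys = 0"
    proof (cases "r \<ge> Nu")
      case True then show ?thesis by (intro sh_zero1) (simp add: Nu)
    next
      case False then have "n - r \<ge> Nv" using that by auto
      then show ?thesis by (intro sh_zero2) (simp add: Nv)
    qed
  qed
  have fin: "finite {n. (\<lambda>xs. if n < 2 \<or> length xs + 1 \<noteq> n then 0 else Bi (\<lambda>y. Pw B u v n (xs @ [y]))) \<noteq> (\<lambda>_. 0)}"
  proof (rule finite_subset[of _ "{..<Nu + Nv}"])
    show "{n. (\<lambda>xs. if n < 2 \<or> length xs + 1 \<noteq> n then 0 else Bi (\<lambda>y. Pw B u v n (xs @ [y]))) \<noteq> (\<lambda>_. 0)} \<subseteq> {..<Nu + Nv}"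
    proof
      fix n assume n: "n \<in> {n. (\<lambda>xs. if n < 2 \<or> length xs + 1 \<noteq> n then 0 else Bi (\<lambda>y. Pw B u v n (xs @ [y]))) \<noteq> (\<lambda>_. 0)}"
      show "n \<in> {..<Nu + Nv}"
      proof (rule ccontr)
        assume "n \<notin> {..<Nu + Nv}"
        then have z: "\<And>ys. Pw B u v n ys = 0" using Pz by auto
        have "(\<lambda>xs. if n < 2 \<or> length xs + 1 \<noteq> n then 0 else Bi (\<lambda>y. Pw B u v n (xs @ [y]))) = (\<lambda>_. 0)"
          by (rule ext) (simp add: z Bi_zero)
        then show False using n by simp
      qed
    qed
  qed simp
  have gu: "\<And>r. good r (Fc B u r)" using good_Fc[OF U] .
  have gv: "\<And>r. good r (Fc B v r)" using good_Fc[OF V] .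
  show ?thesis unfolding Wd_def toC_def Cdot_def
    using cochain_good[OF good_Pw[OF gu gv]] fin by auto
qed

lemma Pw_cadd1: "Pw B (cadd u v) w n ys = Pw B u w n ys + Pw B v w n ys"
  by (simp add: Pw_def Fc_cadd sh_add1 sum.distrib)
lemma Pw_cadd2: "Pw B w (cadd u v) n ys = Pw B w u n ys + Pw B w v n ys"
  by (simp add: Pw_def Fc_cadd sh_add2 sum.distrib)
lemma Pw_csc1: "Pw B (csc \<iota> sm k u) w n ys = \<iota> k * Pw B u w n ys"
  by (simp add: Pw_def Fc_csc sh_mul1 sum_distrib_left)
lemma Pw_csc2: "Pw B w (csc \<iota> sm k u) n ys = \<iota> k * Pw B w u n ys"
  by (simp add: Pw_def Fc_csc sh_mul2 sum_distrib_left)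

lemma W_cadd1: "Wd B (cadd u v) w = cadd (Wd B u w) (Wd B v w)"
  by (rule shaped_ext) (simp_all add: shaped_W shaped_cadd Fc_W Fc_cadd Pw_cadd1)
lemma W_cadd2: "Wd B w (cadd u v) = cadd (Wd B w u) (Wd B w v)"
  by (rule shaped_ext) (simp_all add: shaped_W shaped_cadd Fc_W Fc_cadd Pw_cadd2)
lemma W_csc1: "Wd B (csc \<iota> sm k u) v = csc \<iota> sm k (Wd B u v)"
  by (rule shaped_ext) (simp_all add: shaped_W shaped_csc Fc_W Fc_csc Pw_csc1)
lemma W_csc2: "Wd B u (csc \<iota> sm k v) = csc \<iota> sm k (Wd B u v)"
  by (rule shaped_ext) (simp_all add: shaped_W shaped_csc Fc_W Fc_csc Pw_csc2)

lemma homog_intro: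
  assumes W: "w \<in> Cdot \<iota> sm B" and z: "\<And>n ys. n \<noteq> r \<Longrightarrow> length ys = n \<Longrightarrow> Fc B w n ys = 0"
  shows "homog \<iota> sm B r w"
proof -
  obtain a x c where w: "w = (a, x, c)" by (cases w) auto
  have sh: "shaped w" using Cdot_shaped[OF W] .
  have c01: "c 0 = (\<lambda>_. 0)" "c 1 = (\<lambda>_. 0)" using W by (auto simp: Cdot_def w)
  have "r \<noteq> 0 \<longrightarrow> a = 0" using z[of 0 "[]"] by (auto simp: w Fc_def)
  moreover have "r \<noteq> 1 \<longrightarrow> x = 0"
  proof
    assume "r \<noteq> 1"
    show "x = 0" by (rule B_inj') (use z[of 1 "[_]"] \<open>r \<noteq> 1\<close> in \<open>simp add: w Fc_def\<close>)
  qed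
  moreover have "\<forall>r'. r' \<noteq> r \<longrightarrow> c r' = (\<lambda>_. 0)"
  proof (intro allI impI ext)
    fix r' xs assume r': "r' \<noteq> r"
    show "c r' xs = 0"
    proof (cases "r' < 2 \<or> length xs + 1 \<noteq> r'")
      case True then show ?thesis using sh by (auto simp: w shaped_def)
    next
      case False
      show ?thesis
      proof (rule B_inj')
        fix y
        have "Fc B w r' (xs @ [y]) = 0" using z[OF r'] False by simp
        then show "B (c r' xs) y = B 0 y" using False by (simp add: w Fc_def)
      qed
    qed
  qed
  ultimately show ?thesis unfolding homog_def using W w by simp
qed

lemma homog_Cdot: "homog \<iota> sm B r u \<Longrightarrow> u \<in> Cdot \<iota> sm B"
  unfolding homog_def by simp

lemma W_homog:
  assumes u: "homog \<iota> sm B r u" and v: "homog \<iota> sm B s v"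
  shows "homog \<iota> sm B (r + s) (Wd B u v)"
proof (rule homog_intro)
  show "Wd B u v \<in> Cdot \<iota> sm B" using u v by (simp add: W_Cdot homog_Cdot)
  fix n and ys :: "'e list" assume "n \<noteq> r + s" "length ys = n"
  then show "Fc B (Wd B u v) n ys = 0" by (simp add: Fc_W Pw_hom[OF homog_fhom[OF u] homog_fhom[OF v]])
qed

lemma Fc_W_hom: "homog \<iota> sm B r u \<Longrightarrow> homog \<iota> sm B s v \<Longrightarrow> length ys = n \<Longrightarrow>
   Fc B (Wd B u v) n ys = (if n = r + s then sh r s (Fc B u r) (Fc B v s) ys else 0)"
  by (simp add: Fc_W Pw_hom homog_fhom)

lemma W_assoc_h:
  assumes u: "homog \<iota> sm B r u" and v: "homog \<iota> sm B s v" and w: "homog \<iota> sm B t w"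
  shows "Wd B (Wd B u v) w = Wd B u (Wd B v w)"
proof (rule shaped_ext[OF shaped_W shaped_W])
  fix n and ys :: "'e list" assume l: "length ys = n"
  have uv: "homog \<iota> sm B (r + s) (Wd B u v)" by (rule W_homog[OF u v])
  have vw: "homog \<iota> sm B (s + t) (Wd B v w)" by (rule W_homog[OF v w])
  have 1: "sh (r + s) t (Fc B (Wd B u v) (r + s)) (Fc B w t) ys = sh (r + s) t (sh r s (Fc B u r) (Fc B v s)) (Fc B w t) ys"
    by (rule sh_cong) (simp_all add: Fc_W_hom[OF u v])
  have 2: "sh r (s + t) (Fc B u r) (Fc B (Wd B v w) (s + t)) ys = sh r (s + t) (Fc B u r) (sh s t (Fc B v s) (Fc B w t)) ys"
    by (rule sh_cong) (simp_all add: Fc_W_hom[OF v w])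
  show "Fc B (Wd B (Wd B u v) w) n ys = Fc B (Wd B u (Wd B v w)) n ys"
    by (simp add: Fc_W_hom[OF uv w l] Fc_W_hom[OF u vw l] 1 2 sh_assoc add.assoc)
qed

lemma W_comm_h:
  assumes u: "homog \<iota> sm B r u" and v: "homog \<iota> sm B s v"
  shows "Wd B u v = csc \<iota> sm ((-1) ^ (r * s)) (Wd B v u)"
proof (rule shaped_ext[OF shaped_W shaped_csc[OF shaped_W]])
  fix n and ys :: "'e list" assume l: "length ys = n"
  show "Fc B (Wd B u v) n ys = Fc B (csc \<iota> sm ((-1) ^ (r * s)) (Wd B v u)) n ys"
    by (simp add: Fc_csc Fc_W_hom[OF u v l] Fc_W_hom[OF v u l] sh_comm[of r s] add.commute)
qed

lemma cA_Cdot: "cA a \<in> Cdot \<iota> sm B"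
  unfolding Cdot_def cA_def by (auto simp: cochain_def multilin_def is_der_def intro!: exI[of _ "\<lambda>_ _. 0"])
lemma cE_Cdot: "cE x \<in> Cdot \<iota> sm B"
  unfolding Cdot_def cE_def by (auto simp: cochain_def multilin_def is_der_def intro!: exI[of _ "\<lambda>_ _. 0"])
lemma cA_homog: "homog \<iota> sm B 0 (cA a)"
  by (rule homog_intro[OF cA_Cdot]) (simp add: Fc_cA)
lemma cE_homog: "homog \<iota> sm B 1 (cE x)"
  by (rule homog_intro[OF cE_Cdot]) (simp add: Fc_cE)

lemma W_AA: "Wd B (cA a) (cA b) = cA (a * b)"
proof (rule shaped_ext[OF shaped_W shaped_cA])
  fix n and ys :: "'e list" assume l: "length ys = n"
  show "Fc B (Wd B (cA a) (cA b)) n ys = Fc B (cA (a * b)) n ys"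
    unfolding Fc_W_hom[OF cA_homog cA_homog l] using l by (cases ys) (simp_all add: Fc_cA)
qed

lemma W_AE: "Wd B (cA a) (cE x) = cE (sm a x)"
proof (rule shaped_ext[OF shaped_W shaped_cE])
  fix n and ys :: "'e list" assume l: "length ys = n"
  have H: "Fc B (Wd B (cA a) (cE x)) n ys = (if n = 1 then sh 0 1 (Fc B (cA a) 0) (Fc B (cE x) 1) ys else 0)"
    using Fc_W_hom[OF cA_homog cE_homog l] by simp
  show "Fc B (Wd B (cA a) (cE x)) n ys = Fc B (cE (sm a x)) n ys"
  proof (cases "n = 1")
    case True then obtain y where "ys = [y]" using l by (cases ys) auto
    then show ?thesis unfolding H using True by (simp add: Fc_cA Fc_cE Bsm1)
  next
    case False then show ?thesis by (simp add: H Fc_cE)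
  qed
qed

lemma W_EA: "Wd B (cE x) (cA a) = cE (sm a x)"
proof (rule shaped_ext[OF shaped_W shaped_cE])
  fix n and ys :: "'e list" assume l: "length ys = n"
  have H: "Fc B (Wd B (cE x) (cA a)) n ys = (if n = 1 then sh 1 0 (Fc B (cE x) 1) (Fc B (cA a) 0) ys else 0)"
    using Fc_W_hom[OF cE_homog cA_homog l] by simp
  show "Fc B (Wd B (cE x) (cA a)) n ys = Fc B (cE (sm a x)) n ys"
  proof (cases "n = 1")
    case True then obtain y where "ys = [y]" using l by (cases ys) auto
    then show ?thesis unfolding H using True by (simp add: Fc_cA Fc_cE Bsm1 mult.commute)
  next
    case False then show ?thesis by (simp add: H Fc_cE)
  qed
qed

lemma W_bracket:
  assumes u: "homog \<iota> sm B r u" and v: "homog \<iota> sm B s v"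
  shows "cbrx B (Wd B u v) x = cadd (csc \<iota> sm ((-1) ^ s) (Wd B (cbrx B u x) v)) (Wd B u (cbrx B v x))"
proof (rule shaped_ext[OF shaped_cbrx[OF shaped_W] shaped_cadd[OF shaped_csc[OF shaped_W] shaped_W]])
  fix n and ys :: "'e list" assume l: "length ys = n"
  have fu: "fhom B r u" and fv: "fhom B s v" using u v by (simp_all add: homog_fhom)
  have A: "Pw B (cbrx B u x) v n ys = (if 0 < r \<and> Suc n = r + s then sh (r - 1) s (\<lambda>zs. Fc B u r (x # zs)) (Fc B v s) ys else 0)"
  proof (cases "0 < r")
    case True
    have "Pw B (cbrx B u x) v n ys = (if n = r - 1 + s then sh (r - 1) s (Fc B (cbrx B u x) (r - 1)) (Fc B v s) ys else 0)"
      by (rule Pw_hom[OF fhom_cbrx[OF fu True] fv])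
    also have "sh (r - 1) s (Fc B (cbrx B u x) (r - 1)) (Fc B v s) ys = sh (r - 1) s (\<lambda>zs. Fc B u r (x # zs)) (Fc B v s) ys"
      by (rule sh_cong) (use True in \<open>simp_all add: Fc_cbrx\<close>)
    finally show ?thesis using True by auto
  next
    case False
    then have "fhom B 0 u" using fu by simp
    then show ?thesis using False by (simp add: Pw_zero1 fhom_cbrx0)
  qed
  have Bq: "Pw B u (cbrx B v x) n ys = (if 0 < s \<and> Suc n = r + s then sh r (s - 1) (Fc B u r) (\<lambda>zs. Fc B v s (x # zs)) ys else 0)"
  proof (cases "0 < s")
    case True
    have "Pw B u (cbrx B v x) n ys = (if n = r + (s - 1) then sh r (s - 1) (Fc B u r) (Fc B (cbrx B v x) (s - 1)) ys else 0)"
      by (rule Pw_hom[OF fu fhom_cbrx[OF fv True]])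
    also have "sh r (s - 1) (Fc B u r) (Fc B (cbrx B v x) (s - 1)) ys = sh r (s - 1) (Fc B u r) (\<lambda>zs. Fc B v s (x # zs)) ys"
      by (rule sh_cong) (use True in \<open>simp_all add: Fc_cbrx\<close>)
    finally show ?thesis using True by auto
  next
    case False
    then have "fhom B 0 v" using fv by simp
    have z: "\<And>r' zs. length zs = r' \<Longrightarrow> Fc B (cbrx B v x) r' zs = 0" using \<open>fhom B 0 v\<close> fhom_cbrx0 by blast
    have "Pw B u (cbrx B v x) n ys = 0" unfolding Pw_def by (auto intro!: sum.neutral sh_zero2 z)
    then show ?thesis using False by simp
  qed
  have L: "Fc B (cbrx B (Wd B u v) x) n ys = (if Suc n = r + s then sh r s (Fc B u r) (Fc B v s) (x # ys) else 0)"
    using l by (simp add: Fc_cbrx Fc_W_hom[OF u v])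
  show "Fc B (cbrx B (Wd B u v) x) n ys =
        Fc B (cadd (csc \<iota> sm ((-1) ^ s) (Wd B (cbrx B u x) v)) (Wd B u (cbrx B v x))) n ys"
  proof -
    have R: "Fc B (cadd (csc \<iota> sm ((-1) ^ s) (Wd B (cbrx B u x) v)) (Wd B u (cbrx B v x))) n ys =
        (-1) ^ s * Pw B (cbrx B u x) v n ys + Pw B u (cbrx B v x) n ys"
      unfolding Fc_cadd Fc_csc Fc_W[OF l] by simp
    show ?thesis unfolding L R A Bq
      by (cases "Suc n = r + s"; cases "0 < r"; cases "0 < s") simp_all
  qed
qed

lemma cochain_zero: "2 \<le> r \<Longrightarrow> cochain \<iota> sm B r (\<lambda>_. 0)"
  unfolding cochain_def
  by (intro conjI exI[of _ "\<lambda>_ _. 0"]) (simp_all add: multilin_def is_der_def)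

lemma cochain_ins:
  assumes C: "cochain \<iota> sm B (Suc r) C" and r: "2 \<le> r"
  shows "cochain \<iota> sm B r (\<lambda>xs. C (x # xs))"
proof -
  from C obtain \<sigma> where
    z: "\<And>xs. length xs \<noteq> Suc r - 1 \<Longrightarrow> C xs = 0" and
    ml: "multilin (\<lambda>k y. sm (\<iota> k) y) (\<lambda>k y. sm (\<iota> k) y) (Suc r - 1) C" and
    s1: "\<And>a. ML (Suc r - 2) (\<lambda>xs. \<sigma> xs a)" and
    s2: "\<And>xs. length xs = Suc r - 2 \<Longrightarrow> is_der \<iota> (\<sigma> xs)" and
    s3: "\<And>xs u w. length xs = Suc r - 2 \<Longrightarrow> \<sigma> xs (B u w) = B (C (xs @ [u])) w + B u (C (xs @ [w]))" and
    s4: "\<And>xs i u. length xs = Suc r - 1 \<Longrightarrow> i + 1 < Suc r - 1 \<Longrightarrow>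
          B (C xs + C (xs[i := xs ! (i + 1), i + 1 := xs ! i])) u =
          \<sigma> (take i xs @ drop (i + 2) xs @ [u]) (B (xs ! i) (xs ! (i + 1)))"
    unfolding cochain_def by blast
  show ?thesis unfolding cochain_def
  proof (intro conjI exI[of _ "\<lambda>zs. \<sigma> (x # zs)"] allI impI)
    show "2 \<le> r" by (rule r)
    fix xs :: "'e list" assume "length xs \<noteq> r - 1"
    then show "C (x # xs) = 0" using z r by auto
  next
    show "multilin (\<lambda>k y. sm (\<iota> k) y) (\<lambda>k y. sm (\<iota> k) y) (r - 1) (\<lambda>xs. C (x # xs))"
      using ml_cons[OF ml] by simp
  next
    fix a show "ML (r - 2) (\<lambda>xs. \<sigma> (x # xs) a)" using ml_cons[OF s1[of a], of x] by (simp add: numeral_2_eq_2)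
  next
    fix xs :: "'e list" assume "length xs = r - 2"
    then show "is_der \<iota> (\<sigma> (x # xs))" using s2 r by simp
  next
    fix xs :: "'e list" and u w assume "length xs = r - 2"
    then show "\<sigma> (x # xs) (B u w) = B (C (x # xs @ [u])) w + B u (C (x # xs @ [w]))"
      using s3[of "x # xs" u w] r by simp
  next
    fix xs :: "'e list" and i u assume "length xs = r - 1" "i + 1 < r - 1"
    then show "B (C (x # xs) + C (x # xs[i := xs ! (i + 1), i + 1 := xs ! i])) u =
          \<sigma> (x # take i xs @ drop (i + 2) xs @ [u]) (B (xs ! i) (xs ! (i + 1)))"
      using s4[of "x # xs" "Suc i" u] r by simp
  qed
qed

lemma cbrx_Cdot: "u \<in> Cdot \<iota> sm B \<Longrightarrow> cbrx B u x \<in> Cdot \<iota> sm B"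
proof -
  assume U: "u \<in> Cdot \<iota> sm B"
  obtain a y c where u: "u = (a, y, c)" by (cases u) auto
  have h: "\<And>r. r \<ge> 2 \<Longrightarrow> cochain \<iota> sm B r (c r)" and fin: "finite {r. c r \<noteq> (\<lambda>_. 0)}"
    using U by (auto simp: Cdot_def u)
  have fin2: "finite {r. (\<lambda>xs. if r < 2 then 0 else c (r + 1) (x # xs)) \<noteq> (\<lambda>_. 0)}"
  proof (rule finite_subset[of _ "(\<lambda>r. r - 1) ` {r. c r \<noteq> (\<lambda>_. 0)}"])
    show "{r. (\<lambda>xs. if r < 2 then 0 else c (r + 1) (x # xs)) \<noteq> (\<lambda>_. 0)} \<subseteq> (\<lambda>r. r - 1) ` {r. c r \<noteq> (\<lambda>_. 0)}"
    proof
      fix r assume "r \<in> {r. (\<lambda>xs. if r < 2 then 0 else c (r + 1) (x # xs)) \<noteq> (\<lambda>_. 0)}"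
      then have "c (r + 1) \<noteq> (\<lambda>_. 0)" by auto
      then show "r \<in> (\<lambda>r. r - 1) ` {r. c r \<noteq> (\<lambda>_. 0)}" by (intro image_eqI[of _ _ "r + 1"]) auto
    qed
  qed (use fin in simp)
  have "\<And>r. 2 \<le> r \<Longrightarrow> cochain \<iota> sm B r (\<lambda>xs. c (r + 1) (x # xs))"
    using cochain_ins h by simp
  then show ?thesis unfolding u cbrx_def Cdot_def using fin2 by auto
qed

lemma cbrx_homog: "homog \<iota> sm B r u \<Longrightarrow> 0 < r \<Longrightarrow> homog \<iota> sm B (r - 1) (cbrx B u x)"
proof (rule homog_intro)
  assume "homog \<iota> sm B r u" "0 < r"
  then show "cbrx B u x \<in> Cdot \<iota> sm B" using cbrx_Cdot homog_Cdot by blast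
  fix n and ys :: "'e list" assume "n \<noteq> r - 1" "length ys = n"
  then show "Fc B (cbrx B u x) n ys = 0"
    using fhom_cbrx[OF homog_fhom[OF \<open>homog \<iota> sm B r u\<close>] \<open>0 < r\<close>] unfolding fhom_def by blast
qed

lemma cbrx_homog0: "homog \<iota> sm B 0 u \<Longrightarrow> cbrx B u x = cA 0"
  by (cases u) (auto simp: homog_def cbrx_def cA_def fun_eq_iff)

definition hc :: "nat \<Rightarrow> ('a, 'e) cdot \<Rightarrow> ('a, 'e) cdot" where
  "hc n u = (case u of (a, x, c) \<Rightarrow> (if n = 0 then a else 0, if n = 1 then x else 0,
       \<lambda>r. if r = n \<and> 2 \<le> n then c r else (\<lambda>_. 0)))"

fun ps :: "('a, 'e) cdot \<Rightarrow> nat \<Rightarrow> ('a, 'e) cdot" where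
  "ps u 0 = cA 0"
| "ps u (Suc N) = cadd (ps u N) (hc N u)"

lemma ps_eq: "ps u N = (case u of (a, x, c) \<Rightarrow> (if 0 < N then a else 0, if 1 < N then x else 0,
       \<lambda>r. if r < N \<and> 2 \<le> r then c r else (\<lambda>_. 0)))"
  by (induction N) (cases u, auto simp: cA_def cadd_def hc_def fun_eq_iff)+

lemma hc_homog: "u \<in> Cdot \<iota> sm B \<Longrightarrow> homog \<iota> sm B n (hc n u)"
proof -
  assume U: "u \<in> Cdot \<iota> sm B"
  obtain a x c where u: "u = (a, x, c)" by (cases u) auto
  have h: "\<And>r. r \<ge> 2 \<Longrightarrow> cochain \<iota> sm B r (c r)" using U by (auto simp: Cdot_def u)
  have fin: "finite {r. (if r = n \<and> 2 \<le> n then c r else (\<lambda>_. 0)) \<noteq> (\<lambda>_. 0)}"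
    by (rule finite_subset[of _ "{n}"]) auto
  have "hc n u \<in> Cdot \<iota> sm B"
    unfolding hc_def u Cdot_def using fin h cochain_zero by auto
  then show ?thesis unfolding homog_def hc_def u by auto
qed

lemma ps_Cdot: "u \<in> Cdot \<iota> sm B \<Longrightarrow> ps u N \<in> Cdot \<iota> sm B"
proof -
  assume U: "u \<in> Cdot \<iota> sm B"
  obtain a x c where u: "u = (a, x, c)" by (cases u) auto
  have h: "\<And>r. r \<ge> 2 \<Longrightarrow> cochain \<iota> sm B r (c r)" and fin: "finite {r. c r \<noteq> (\<lambda>_. 0)}"
    using U by (auto simp: Cdot_def u)
  have fin2: "finite {r. (if r < N \<and> 2 \<le> r then c r else (\<lambda>_. 0)) \<noteq> (\<lambda>_. 0)}"
    by (rule finite_subset[of _ "{..<N}"]) auto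
  show ?thesis unfolding ps_eq u Cdot_def using fin2 h cochain_zero by auto
qed

lemma ps_full: "u \<in> Cdot \<iota> sm B \<Longrightarrow> \<exists>N. ps u N = u"
proof -
  assume U: "u \<in> Cdot \<iota> sm B"
  obtain a x c where u: "u = (a, x, c)" by (cases u) auto
  have c01: "c 0 = (\<lambda>_. 0)" "c 1 = (\<lambda>_. 0)" and fin: "finite {r. c r \<noteq> (\<lambda>_. 0)}"
    using U by (auto simp: Cdot_def u)
  define N where "N = Max (insert 0 {r. c r \<noteq> (\<lambda>_. 0)}) + 2"
  have "(\<lambda>r. if r < N \<and> 2 \<le> r then c r else (\<lambda>_. 0)) = c"
  proof
    fix r
    show "(if r < N \<and> 2 \<le> r then c r else (\<lambda>_. 0)) = c r"
    proof (cases "r < N \<and> 2 \<le> r")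
      case True then show ?thesis by simp
    next
      case False
      show ?thesis
      proof (cases "2 \<le> r")
        case True
        then have "\<not> r < N" using False by simp
        show ?thesis
        proof (rule ccontr)
          assume "(if r < N \<and> 2 \<le> r then c r else (\<lambda>_. 0)) \<noteq> c r"
          then have "c r \<noteq> (\<lambda>_. 0)" using False by simp
          then have "r \<le> Max (insert 0 {r. c r \<noteq> (\<lambda>_. 0)})" using fin by (intro Max_ge) auto
          then show False using \<open>\<not> r < N\<close> by (simp add: N_def)
        qed
      next
        case False2: False
        then have "r = 0 \<or> r = 1" by auto
        then show ?thesis using c01 False by auto
      qed
    qed
  qed
  moreover have "0 < N" "1 < N" by (simp_all add: N_def)
  ultimately have "ps u N = u" by (simp add: ps_eq u)
  then show ?thesis by blast
qed

lemma cdot_induct: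
  assumes add: "\<And>u v. u \<in> Cdot \<iota> sm B \<Longrightarrow> v \<in> Cdot \<iota> sm B \<Longrightarrow> Q u \<Longrightarrow> Q v \<Longrightarrow> Q (cadd u v)"
    and hom: "\<And>r u. homog \<iota> sm B r u \<Longrightarrow> Q u"
    and U: "u \<in> Cdot \<iota> sm B"
  shows "Q u"
proof -
  have "Q (ps u N)" for N
  proof (induction N)
    case 0 show ?case using hom[OF cA_homog] by simp
  next
    case (Suc N)
    show ?case using add[OF ps_Cdot[OF U] homog_Cdot[OF hc_homog[OF U]] Suc hom[OF hc_homog[OF U]]] by simp
  qed
  then show ?thesis using ps_full[OF U] by metis
qed

lemma W_assoc:
  assumes "u \<in> Cdot \<iota> sm B" "v \<in> Cdot \<iota> sm B" "w \<in> Cdot \<iota> sm B"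
  shows "Wd B (Wd B u v) w = Wd B u (Wd B v w)"
proof -
  have "\<forall>v\<in>Cdot \<iota> sm B. \<forall>w\<in>Cdot \<iota> sm B. Wd B (Wd B u v) w = Wd B u (Wd B v w)"
  proof (rule cdot_induct[OF _ _ assms(1)])
    fix u1 u2 assume "\<forall>v\<in>Cdot \<iota> sm B. \<forall>w\<in>Cdot \<iota> sm B. Wd B (Wd B u1 v) w = Wd B u1 (Wd B v w)"
      "\<forall>v\<in>Cdot \<iota> sm B. \<forall>w\<in>Cdot \<iota> sm B. Wd B (Wd B u2 v) w = Wd B u2 (Wd B v w)"
    then show "\<forall>v\<in>Cdot \<iota> sm B. \<forall>w\<in>Cdot \<iota> sm B. Wd B (Wd B (cadd u1 u2) v) w = Wd B (cadd u1 u2) (Wd B v w)"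
      by (simp add: W_cadd1)
  next
    fix r u assume hu: "homog \<iota> sm B r u"
    show "\<forall>v\<in>Cdot \<iota> sm B. \<forall>w\<in>Cdot \<iota> sm B. Wd B (Wd B u v) w = Wd B u (Wd B v w)"
    proof
      fix v assume V: "v \<in> Cdot \<iota> sm B"
      show "\<forall>w\<in>Cdot \<iota> sm B. Wd B (Wd B u v) w = Wd B u (Wd B v w)"
      proof (rule cdot_induct[OF _ _ V])
        fix v1 v2 assume "\<forall>w\<in>Cdot \<iota> sm B. Wd B (Wd B u v1) w = Wd B u (Wd B v1 w)"
          "\<forall>w\<in>Cdot \<iota> sm B. Wd B (Wd B u v2) w = Wd B u (Wd B v2 w)"
        then show "\<forall>w\<in>Cdot \<iota> sm B. Wd B (Wd B u (cadd v1 v2)) w = Wd B u (Wd B (cadd v1 v2) w)"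
          by (simp add: W_cadd1 W_cadd2)
      next
        fix s v assume hv: "homog \<iota> sm B s v"
        show "\<forall>w\<in>Cdot \<iota> sm B. Wd B (Wd B u v) w = Wd B u (Wd B v w)"
        proof
          fix w assume W: "w \<in> Cdot \<iota> sm B"
          show "Wd B (Wd B u v) w = Wd B u (Wd B v w)"
          proof (rule cdot_induct[OF _ _ W])
            fix w1 w2 assume "Wd B (Wd B u v) w1 = Wd B u (Wd B v w1)" "Wd B (Wd B u v) w2 = Wd B u (Wd B v w2)"
            then show "Wd B (Wd B u v) (cadd w1 w2) = Wd B u (Wd B v (cadd w1 w2))"
              by (simp add: W_cadd2)
          next
            fix t w assume "homog \<iota> sm B t w"
            then show "Wd B (Wd B u v) w = Wd B u (Wd B v w)" by (rule W_assoc_h[OF hu hv])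
          qed
        qed
      qed
    qed
  qed
  then show ?thesis using assms by blast
qed

lemma W_is_wedge: "is_wedge \<iota> sm B (Wd B)"
  unfolding is_wedge_def
  apply (intro conjI ballI allI impI)
  apply (simp add: W_Cdot)
  apply (rule W_cadd1)
  apply (rule W_cadd2)
  apply (rule W_csc1)
  apply (rule W_csc2)
  apply (simp add: W_homog)
  apply (simp add: W_assoc)
  apply (erule (1) W_comm_h)
  apply (rule W_AA)
  apply (simp add: W_AA mult.commute)
  apply (rule W_AE)
  apply (rule W_EA)
  apply (erule (1) W_bracket)
  done

lemma isw_cl: assumes "is_wedge \<iota> sm B W" "u \<in> Cdot \<iota> sm B" "v \<in> Cdot \<iota> sm B"
  shows "W u v \<in> Cdot \<iota> sm B"
proof -
  from assms(1) have "\<forall>u\<in>Cdot \<iota> sm B. \<forall>v\<in>Cdot \<iota> sm B. W u v \<in> Cdot \<iota> sm B"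
    unfolding is_wedge_def by (elim conjE) assumption
  then show ?thesis using assms by blast
qed
lemma isw_add: assumes "is_wedge \<iota> sm B W" "u \<in> Cdot \<iota> sm B" "v \<in> Cdot \<iota> sm B" "w \<in> Cdot \<iota> sm B"
  shows "W (cadd u v) w = cadd (W u w) (W v w)" "W w (cadd u v) = cadd (W w u) (W w v)"
proof -
  from assms(1) have "\<forall>u\<in>Cdot \<iota> sm B. \<forall>v\<in>Cdot \<iota> sm B. \<forall>w\<in>Cdot \<iota> sm B.
        W (cadd u v) w = cadd (W u w) (W v w) \<and> W w (cadd u v) = cadd (W w u) (W w v)"
    unfolding is_wedge_def by (elim conjE) assumption
  then show "W (cadd u v) w = cadd (W u w) (W v w)" "W w (cadd u v) = cadd (W w u) (W w v)"
    using assms by blast+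
qed
lemma isw_homog: assumes "is_wedge \<iota> sm B W" "homog \<iota> sm B r u" "homog \<iota> sm B s v"
  shows "homog \<iota> sm B (r + s) (W u v)"
proof -
  from assms(1) have "\<forall>r s u v. homog \<iota> sm B r u \<longrightarrow> homog \<iota> sm B s v \<longrightarrow> homog \<iota> sm B (r + s) (W u v)"
    unfolding is_wedge_def by (elim conjE) assumption
  then show ?thesis using assms by blast
qed
lemma isw_AA: assumes "is_wedge \<iota> sm B W" shows "W (cA a) (cA b) = cA (a * b)"
proof -
  from assms(1) have "\<forall>a b. W (cA a) (cA b) = cA (a * b) \<and> W (cA b) (cA a) = cA (a * b)"
    unfolding is_wedge_def by (elim conjE) assumption
  then show ?thesis by blast
qed
lemma isw_br: assumes "is_wedge \<iota> sm B W" "homog \<iota> sm B r u" "homog \<iota> sm B s v"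
  shows "cbrx B (W u v) x = cadd (csc \<iota> sm ((-1) ^ s) (W (cbrx B u x) v)) (W u (cbrx B v x))"
proof -
  from assms(1) have "\<forall>r s u v x. homog \<iota> sm B r u \<longrightarrow> homog \<iota> sm B s v \<longrightarrow>
        cbrx B (W u v) x = cadd (csc \<iota> sm ((-1) ^ s) (W (cbrx B u x) v)) (W u (cbrx B v x))"
    unfolding is_wedge_def by (elim conjE) assumption
  then show ?thesis using assms by blast
qed

lemma cadd_self_zero: "cadd t t = t \<Longrightarrow> t = (cA 0 :: ('a, 'e) cdot)"
proof -
  assume h: "cadd t t = t"
  obtain a x c where t: "t = (a, x, c)" by (cases t) auto
  from h have "a + a = a" "x + x = x" "\<And>r xs. c r xs + c r xs = c r xs"
    by (auto simp: t cadd_def fun_eq_iff)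
  then have "a = 0" "x = 0" "c = (\<lambda>_ _. 0)" by (auto simp: fun_eq_iff)
  then show ?thesis by (simp add: t cA_def)
qed

lemma cA0_cadd: "cadd (cA 0) (cA 0) = (cA 0 :: ('a, 'e) cdot)"
  by (simp add: cadd_def cA_def)

lemma wedge_zero1: "is_wedge \<iota> sm B W' \<Longrightarrow> v \<in> Cdot \<iota> sm B \<Longrightarrow> W' (cA 0) v = cA 0"
proof -
  assume w: "is_wedge \<iota> sm B W'" and V: "v \<in> Cdot \<iota> sm B"
  have "W' (cadd (cA 0) (cA 0)) v = cadd (W' (cA 0) v) (W' (cA 0) v)"
    using isw_add(1)[OF w cA_Cdot cA_Cdot V] .
  then show ?thesis by (intro cadd_self_zero) (simp add: cA0_cadd)
qed

lemma wedge_zero2: "is_wedge \<iota> sm B W' \<Longrightarrow> v \<in> Cdot \<iota> sm B \<Longrightarrow> W' v (cA 0) = cA 0"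
proof -
  assume w: "is_wedge \<iota> sm B W'" and V: "v \<in> Cdot \<iota> sm B"
  have "W' v (cadd (cA 0) (cA 0)) = cadd (W' v (cA 0)) (W' v (cA 0))"
    using isw_add(2)[OF w cA_Cdot cA_Cdot V] .
  then show ?thesis by (intro cadd_self_zero) (simp add: cA0_cadd)
qed

lemma homog0_cA: "homog \<iota> sm B 0 u \<Longrightarrow> u = cA (fst u)"
proof -
  assume h: "homog \<iota> sm B 0 u"
  obtain a x c where u: "u = (a, x, c)" by (cases u) auto
  have "x = 0" "\<And>r. r \<noteq> 0 \<Longrightarrow> c r = (\<lambda>_. 0)" "c 0 = (\<lambda>_. 0)" using h by (auto simp: homog_def u Cdot_def)
  then have "c = (\<lambda>_ _. 0)" by (metis ext)
  then show ?thesis using \<open>x = 0\<close> by (simp add: u cA_def)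
qed

lemma uniq_h:
  assumes w: "is_wedge \<iota> sm B W'"
  shows "homog \<iota> sm B r u \<Longrightarrow> homog \<iota> sm B s v \<Longrightarrow> W' u v = Wd B u v"
proof -
  have wW: "is_wedge \<iota> sm B (Wd B)" by (rule W_is_wedge)
  have "\<forall>r s u v. r + s = n \<longrightarrow> homog \<iota> sm B r u \<longrightarrow> homog \<iota> sm B s v \<longrightarrow> W' u v = Wd B u v" for n
  proof (induction n rule: less_induct)
    case (less n)
    show ?case
    proof (intro allI impI)
      fix r s u v assume n: "r + s = n" and hu: "homog \<iota> sm B r u" and hv: "homog \<iota> sm B s v"
      show "W' u v = Wd B u v"
      proof (cases "n = 0")
        case True
        then have "r = 0" "s = 0" using n by auto
        then have "u = cA (fst u)" "v = cA (fst v)" using hu hv homog0_cA by auto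
        moreover have "W' (cA a) (cA b) = cA (a * b)" for a b using isw_AA[OF w] .
        ultimately show ?thesis by (metis W_AA)
      next
        case False
        have hw': "homog \<iota> sm B (r + s) (W' u v)" using isw_homog[OF w hu hv] .
        have hW: "homog \<iota> sm B (r + s) (Wd B u v)" by (rule W_homog[OF hu hv])
        have E1: "W' (cbrx B u x) v = Wd B (cbrx B u x) v" for x
        proof (cases "0 < r")
          case True
          have "r - 1 + s < n" using True n by auto
          then show ?thesis using less.IH cbrx_homog[OF hu True] hv by blast
        next
          case False
          then have "cbrx B u x = cA 0" using hu cbrx_homog0 by simp
          then show ?thesis using wedge_zero1[OF w homog_Cdot[OF hv]] wedge_zero1[OF wW homog_Cdot[OF hv]] by simp
        qed
        have E2: "W' u (cbrx B v x) = Wd B u (cbrx B v x)" for x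
        proof (cases "0 < s")
          case True
          have "r + (s - 1) < n" using True n by auto
          then show ?thesis using less.IH cbrx_homog[OF hv True] hu by blast
        next
          case False
          then have "cbrx B v x = cA 0" using hv cbrx_homog0 by simp
          then show ?thesis using wedge_zero2[OF w homog_Cdot[OF hu]] wedge_zero2[OF wW homog_Cdot[OF hu]] by simp
        qed
        have BR: "cbrx B (W' u v) x = cbrx B (Wd B u v) x" for x
        proof -
          have "cbrx B (W' u v) x = cadd (csc \<iota> sm ((-1) ^ s) (W' (cbrx B u x) v)) (W' u (cbrx B v x))"
            using isw_br[OF w hu hv] .
          also have "\<dots> = cbrx B (Wd B u v) x" using W_bracket[OF hu hv] E1 E2 by simp
          finally show ?thesis .
        qed
        show ?thesis
        proof (rule shaped_ext[OF Cdot_shaped[OF homog_Cdot[OF hw']] shaped_W])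
          fix m and ys :: "'e list" assume l: "length ys = m"
          show "Fc B (W' u v) m ys = Fc B (Wd B u v) m ys"
          proof (cases ys)
            case Nil
            then have "m \<noteq> r + s" using l n False by auto
            then show ?thesis using homog_fhom[OF hw'] homog_fhom[OF hW] l unfolding fhom_def by auto
          next
            case (Cons x zs)
            then have lz: "length zs = m - 1" "m = Suc (m - 1)" using l by auto
            have "Fc B (W' u v) m ys = Fc B (cbrx B (W' u v) x) (m - 1) zs"
              using Fc_cbrx[OF lz(1)] lz(2) Cons by simp
            also have "\<dots> = Fc B (cbrx B (Wd B u v) x) (m - 1) zs" by (simp add: BR)
            also have "\<dots> = Fc B (Wd B u v) m ys"
              using Fc_cbrx[OF lz(1)] lz(2) Cons by simp
            finally show ?thesis .
          qed
        qed
      qed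
    qed
  qed
  then show "homog \<iota> sm B r u \<Longrightarrow> homog \<iota> sm B s v \<Longrightarrow> W' u v = Wd B u v" by blast
qed

lemma uniq:
  assumes w: "is_wedge \<iota> sm B W'" and U: "u \<in> Cdot \<iota> sm B" and V: "v \<in> Cdot \<iota> sm B"
  shows "W' u v = Wd B u v"
proof -
  have add1: "W' (cadd u1 u2) v = cadd (W' u1 v) (W' u2 v)"
    if "u1 \<in> Cdot \<iota> sm B" "u2 \<in> Cdot \<iota> sm B" "v \<in> Cdot \<iota> sm B" for u1 u2 v
    using isw_add(1)[OF w that] .
  have add2: "W' v (cadd u1 u2) = cadd (W' v u1) (W' v u2)"
    if "u1 \<in> Cdot \<iota> sm B" "u2 \<in> Cdot \<iota> sm B" "v \<in> Cdot \<iota> sm B" for u1 u2 v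
    using isw_add(2)[OF w that] .
  have "\<forall>v\<in>Cdot \<iota> sm B. W' u v = Wd B u v"
  proof (rule cdot_induct[OF _ _ U])
    fix u1 u2 assume "u1 \<in> Cdot \<iota> sm B" "u2 \<in> Cdot \<iota> sm B"
      "\<forall>v\<in>Cdot \<iota> sm B. W' u1 v = Wd B u1 v" "\<forall>v\<in>Cdot \<iota> sm B. W' u2 v = Wd B u2 v"
    then show "\<forall>v\<in>Cdot \<iota> sm B. W' (cadd u1 u2) v = Wd B (cadd u1 u2) v"
      by (simp add: add1 W_cadd1)
  next
    fix r u assume hu: "homog \<iota> sm B r u"
    show "\<forall>v\<in>Cdot \<iota> sm B. W' u v = Wd B u v"
    proof
      fix v assume V: "v \<in> Cdot \<iota> sm B"
      show "W' u v = Wd B u v"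
      proof (rule cdot_induct[OF _ _ V])
        fix v1 v2 assume "v1 \<in> Cdot \<iota> sm B" "v2 \<in> Cdot \<iota> sm B" "W' u v1 = Wd B u v1" "W' u v2 = Wd B u v2"
        then show "W' u (cadd v1 v2) = Wd B u (cadd v1 v2)"
          using homog_Cdot[OF hu] by (simp add: add2 W_cadd2)
      next
        fix s v assume "homog \<iota> sm B s v"
        then show "W' u v = Wd B u v" by (rule uniq_h[OF w hu])
      qed
    qed
  qed
  then show ?thesis using V by blast
qed

end

theorem mainTheorem7:
  fixes \<iota> :: "'r::comm_ring_1 \<Rightarrow> 'a::comm_ring_1"
    and sm :: "'a \<Rightarrow> 'e::ab_group_add \<Rightarrow> 'e"
    and B :: "'e \<Rightarrow> 'e \<Rightarrow> 'a"
  assumes "\<exists>\<phi>::rat \<Rightarrow> 'r. ring_hom_fn \<phi> \<and> inj \<phi>"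
    and "ring_hom_fn \<iota>"
    and "module sm"
    and "fg_projective sm"
    and "sym_bilinear sm B"
    and "strongly_nondeg sm B"
    and "full_form B"
  shows "\<exists>W. is_wedge \<iota> sm B W \<and>
           (\<forall>W'. is_wedge \<iota> sm B W' \<longrightarrow>
              (\<forall>u\<in>Cdot \<iota> sm B. \<forall>v\<in>Cdot \<iota> sm B. W' u v = W u v))"
proof -
  have "wctx \<iota> sm B" unfolding wctx_def using assms by blast
  then interpret wctx \<iota> sm B .
  show ?thesis
    by (intro exI[of _ "Wd B"] conjI W_is_wedge allI impI ballI) (rule uniq)
qed

end
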